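(* Let $w_1, w_2 \geq 0$ with $w_1 + w_2 > 0$, and let $\sigma\approx 2.14790$ be the unique positive real root of $x^4 - 3x^2 - 3x - 1$. Both for the class of symmetric simultaneous two-player weighted congestion games with affine costs, proportional cost functions and player weights $w_1,w_2$, and for its subclass of network routing games, the price of anarchy (with respect to pure Nash equilibria) is equal to \begin{enumerate} \item[(a)] $\dfrac{ 2w_1^4 + 6w_1^3w_2 + 8w_1^2w_2^2 + 6w_1w_2^3 + 2w_2^4 }{ 2w_1^4 + 3w_1^3w_2 + 4w_1^2w_2^2 + 3w_1w_2^3 + 2w_2^4 + w_1w_2 \min(w_1^2,w_2^2) }$ if $\frac{w_2}{\sigma} \leq w_1 \leq \sigma w_2$; \item[(b)] $\dfrac{ 2w_1^3w_2 + 4w_1^2w_2^2 + 2w_1w_2^3 + 2\max(w_1^4+w_1^3w_2,\,w_1w_2^3+w_2^4) }{ w_1^3w_2 + 2w_1^2w_2^2 + w_1w_2^3 + 2w_1w_2 \min(w_1^2,w_2^2) + 2\max(w_1^4,w_2^4) + \min(w_1^4,w_2^4) }$ if $w_1 \geq \sigma w_2$ or $w_1 \leq \frac{w_2}{\sigma}$. \end{enumerate}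
   Context: A weighted two-player congestion game with affine costs consists of a finite set $R$ of resources, coefficients $\alpha_r,\beta_r \geq 0$ for each $r\in R$, two players $i=1,2$ with weights $w_i\ge 0$, and for each player $i$ a nonempty finite set $\mathcal{A}_i \subseteq 2^R$ of actions; it is symmetric if $\mathcal{A}_1=\mathcal{A}_2$. In a network routing game, $R$ is the arc set of a directed graph, player $i$ has a source $s_i$ and sink $t_i$, and $\mathcal{A}_i$ is the set of arc sets of directed $s_i$–$t_i$ paths (symmetric: common source and common sink). For an action profile $A=(A_1,A_2)$ the load of $r$ is $x_r(A)=\sum_{j:\, r\in A_j} w_j$. With proportional costs, player $i$ pays $C_i(A)=w_i\sum_{r\in A_i}(\alpha_r+\beta_r x_r(A))$. The social cost is $C(A)=C_1(A)+C_2(A)$. A pure Nash equilibrium is a profile from which no player can lower her cost by unilaterally changing her action. The price of anarchy of an instance is the maximum over Nash equilibria $A$ of $C(A)/\min_{A'} C(A')$; the price of anarchy of a class is the supremum over all instances (with positive optimal social cost). *)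

theory Defs
  imports Complex_Main "HOL-Library.Extended_Real"
begin

text \<open>Resources are natural numbers (every finite resource
set can be relabelled into nat).\<close>

definition load :: "real \<Rightarrow> real \<Rightarrow> nat set \<times> nat set \<Rightarrow> nat \<Rightarrow> real" where
  "load w1 w2 A r = (if r \<in> fst A then w1 else 0) + (if r \<in> snd A then w2 else 0)"

definition cost1 :: "real \<Rightarrow> real \<Rightarrow> (nat \<Rightarrow> real) \<Rightarrow> (nat \<Rightarrow> real) \<Rightarrow> nat set \<times> nat set \<Rightarrow> real" where
  "cost1 w1 w2 \<alpha> \<beta> A = w1 * (\<Sum>r\<in>fst A. \<alpha> r + \<beta> r * load w1 w2 A r)"

definition cost2 :: "real \<Rightarrow> real \<Rightarrow> (nat \<Rightarrow> real) \<Rightarrow> (nat \<Rightarrow> real) \<Rightarrow> nat set \<times> nat set \<Rightarrow> real" where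
  "cost2 w1 w2 \<alpha> \<beta> A = w2 * (\<Sum>r\<in>snd A. \<alpha> r + \<beta> r * load w1 w2 A r)"

definition social_cost :: "real \<Rightarrow> real \<Rightarrow> (nat \<Rightarrow> real) \<Rightarrow> (nat \<Rightarrow> real) \<Rightarrow> nat set \<times> nat set \<Rightarrow> real" where
  "social_cost w1 w2 \<alpha> \<beta> A = cost1 w1 w2 \<alpha> \<beta> A + cost2 w1 w2 \<alpha> \<beta> A"

definition is_NE :: "real \<Rightarrow> real \<Rightarrow> (nat \<Rightarrow> real) \<Rightarrow> (nat \<Rightarrow> real) \<Rightarrow> nat set set \<Rightarrow> nat set \<times> nat set \<Rightarrow> bool" where
  "is_NE w1 w2 \<alpha> \<beta> Acts A \<longleftrightarrow> A \<in> Acts \<times> Acts \<and>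
     (\<forall>a\<in>Acts. cost1 w1 w2 \<alpha> \<beta> A \<le> cost1 w1 w2 \<alpha> \<beta> (a, snd A)) \<and>
     (\<forall>a\<in>Acts. cost2 w1 w2 \<alpha> \<beta> A \<le> cost2 w1 w2 \<alpha> \<beta> (fst A, a))"

definition opt_cost :: "real \<Rightarrow> real \<Rightarrow> (nat \<Rightarrow> real) \<Rightarrow> (nat \<Rightarrow> real) \<Rightarrow> nat set set \<Rightarrow> real" where
  "opt_cost w1 w2 \<alpha> \<beta> Acts = Min (social_cost w1 w2 \<alpha> \<beta> ` (Acts \<times> Acts))"

definition poa_instance :: "real \<Rightarrow> real \<Rightarrow> (nat \<Rightarrow> real) \<Rightarrow> (nat \<Rightarrow> real) \<Rightarrow> nat set set \<Rightarrow> ereal" where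
  "poa_instance w1 w2 \<alpha> \<beta> Acts =
     Sup {ereal (social_cost w1 w2 \<alpha> \<beta> A / opt_cost w1 w2 \<alpha> \<beta> Acts) | A. is_NE w1 w2 \<alpha> \<beta> Acts A}"

definition poa_class :: "real \<Rightarrow> real \<Rightarrow> ((nat \<Rightarrow> real) \<times> (nat \<Rightarrow> real) \<times> nat set set) set \<Rightarrow> ereal" where
  "poa_class w1 w2 G =
     Sup {poa_instance w1 w2 \<alpha> \<beta> Acts | \<alpha> \<beta> Acts.
            (\<alpha>, \<beta>, Acts) \<in> G \<and> opt_cost w1 w2 \<alpha> \<beta> Acts > 0}"

definition sym_game :: "nat set \<Rightarrow> (nat \<Rightarrow> real) \<Rightarrow> (nat \<Rightarrow> real) \<Rightarrow> nat set set \<Rightarrow> bool" where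
  "sym_game R \<alpha> \<beta> Acts \<longleftrightarrow> finite R \<and> (\<forall>r\<in>R. \<alpha> r \<ge> 0 \<and> \<beta> r \<ge> 0) \<and>
     finite Acts \<and> Acts \<noteq> {} \<and> (\<forall>a\<in>Acts. a \<subseteq> R)"

definition sym_congestion_games :: "((nat \<Rightarrow> real) \<times> (nat \<Rightarrow> real) \<times> nat set set) set" where
  "sym_congestion_games = {(\<alpha>, \<beta>, Acts). \<exists>R. sym_game R \<alpha> \<beta> Acts}"

text \<open>Directed (multi)graphs: arcs are natural numbers with tail and head vertices.
A walk from u to v is a list of arcs; a path is a walk visiting distinct vertices.\<close>
fun walk :: "(nat \<Rightarrow> nat) \<Rightarrow> (nat \<Rightarrow> nat) \<Rightarrow> nat \<Rightarrow> nat \<Rightarrow> nat list \<Rightarrow> bool" where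
  "walk tail head u v [] \<longleftrightarrow> u = v"
| "walk tail head u v (e # es) \<longleftrightarrow> tail e = u \<and> walk tail head (head e) v es"

definition is_path :: "nat set \<Rightarrow> (nat \<Rightarrow> nat) \<Rightarrow> (nat \<Rightarrow> nat) \<Rightarrow> nat \<Rightarrow> nat \<Rightarrow> nat list \<Rightarrow> bool" where
  "is_path E tail head s t p \<longleftrightarrow> set p \<subseteq> E \<and> walk tail head s t p \<and> distinct (s # map head p)"

definition sym_network_games :: "((nat \<Rightarrow> real) \<times> (nat \<Rightarrow> real) \<times> nat set set) set" where
  "sym_network_games = {(\<alpha>, \<beta>, Acts). \<exists>E tail head s t.
      sym_game E \<alpha> \<beta> Acts \<and> Acts = {set p | p. is_path E tail head s t p}}"

definition sigma :: real where
  "sigma = (THE x. x > 0 \<and> x ^ 4 - 3 * x\<^sup>2 - 3 * x - 1 = 0)"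

end

theory Submission
  imports Defs
begin

definition q3 :: "real \<Rightarrow> real" where "q3 t = t^3 - t^2 - 2*t - 1"

lemma q3_neg: "0 < t \<Longrightarrow> t \<le> 2 \<Longrightarrow> q3 t < 0"
proof -
  assume a: "0 < t" "t \<le> 2"
  have "q3 t = t*((t-2)*(t+1)) - 1" unfolding q3_def by algebra
  moreover have "t*((t-2)*(t+1)) \<le> 0" using a by (intro mult_nonneg_nonpos mult_nonpos_nonneg) auto
  ultimately show ?thesis by linarith
qed

lemma q3_mono: "2 \<le> s \<Longrightarrow> s \<le> t \<Longrightarrow> q3 s \<le> q3 t"
proof -
  assume a: "2 \<le> s" "s \<le> t"
  have "q3 t - q3 s = (t - s) * (t*t + t*s + s*s - t - s - 2)" unfolding q3_def by algebra
  moreover have "t*t + t*s + s*s - t - s - 2 \<ge> 0"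
  proof -
    have "t*t \<ge> 2*t" "s*s \<ge> 2*s" using a by (auto intro: mult_right_mono)
    moreover have "t*s \<ge> 2*2" using a by (intro mult_mono) auto
    ultimately show ?thesis using a by linarith
  qed
  ultimately show ?thesis using a by (metis diff_ge_0_iff_ge mult_nonneg_nonneg)
qed

lemma q3_strict: "2 \<le> s \<Longrightarrow> s < t \<Longrightarrow> q3 s < q3 t"
proof -
  assume a: "2 \<le> s" "s < t"
  have "q3 t - q3 s = (t - s) * (t*t + t*s + s*s - t - s - 2)" unfolding q3_def by algebra
  moreover have "t*t + t*s + s*s - t - s - 2 > 0"
  proof -
    have "t*t \<ge> 2*t" "s*s \<ge> 2*s" using a by (auto intro: mult_right_mono)
    moreover have "t*s \<ge> 2*2" using a by (intro mult_mono) auto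
    ultimately show ?thesis using a by linarith
  qed
  ultimately show ?thesis using a by (metis diff_gt_0_iff_gt mult_pos_pos)
qed

lemma q3_root_ex: "\<exists>r. 2 \<le> r \<and> r \<le> 3 \<and> q3 r = 0"
proof -
  have "\<exists>r\<ge>2. r \<le> 3 \<and> q3 r = 0"
    by (rule IVT) (auto simp: q3_def intro!: continuous_intros)
  then show ?thesis by blast
qed

lemma sigma_props: "2 < sigma \<and> q3 sigma = 0"
proof -
  obtain r where r: "2 \<le> r" "r \<le> 3" "q3 r = 0" using q3_root_ex by blast
  have r2: "2 < r" using r q3_neg[of 2] by (cases "r = 2") auto
  have quart: "\<And>t. t^4 - 3*t\<^sup>2 - 3*t - 1 = (t+1) * q3 t" unfolding q3_def by algebra
  have "sigma = r"
    unfolding sigma_def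
  proof (rule the_equality)
    show "0 < r \<and> r ^ 4 - 3 * r\<^sup>2 - 3 * r - 1 = 0" using r r2 quart[of r] by simp
  next
    fix t :: real assume t: "0 < t \<and> t ^ 4 - 3 * t\<^sup>2 - 3 * t - 1 = 0"
    then have "(t+1) * q3 t = 0" using quart[of t] by linarith
    moreover have "t + 1 \<noteq> 0" using t by linarith
    ultimately have "q3 t = 0" by simp
    then have t2: "2 < t" using t q3_neg[of t] by force
    show "t = r"
    proof (rule ccontr)
      assume "t \<noteq> r"
      then consider "t < r" | "r < t" by linarith
      then show False
        using q3_strict[of t r] q3_strict[of r t] t2 r2 \<open>q3 t = 0\<close> r(3) by (cases; auto)
    qed
  qed
  then show ?thesis using r r2 by simp
qed

lemma q3_le: "0 < t \<Longrightarrow> t \<le> sigma \<Longrightarrow> q3 t \<le> 0"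
  using q3_neg[of t] q3_mono[of t sigma] sigma_props by (cases "t \<le> 2") auto

lemma q3_ge: "sigma \<le> t \<Longrightarrow> 0 \<le> q3 t"
  using q3_mono[of sigma t] sigma_props by auto

lemma load_swap: "load w1 w2 A r = load w2 w1 (prod.swap A) r"
  by (cases A) (simp add: load_def)

lemma cost1_swap: "cost1 w1 w2 \<alpha> \<beta> A = cost2 w2 w1 \<alpha> \<beta> (prod.swap A)"
  by (cases A) (simp add: cost1_def cost2_def load_def add.commute)

lemma cost2_swap: "cost2 w1 w2 \<alpha> \<beta> A = cost1 w2 w1 \<alpha> \<beta> (prod.swap A)"
  by (cases A) (simp add: cost1_def cost2_def load_def add.commute)

lemma social_swap: "social_cost w1 w2 \<alpha> \<beta> A = social_cost w2 w1 \<alpha> \<beta> (prod.swap A)"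
  by (simp add: social_cost_def cost1_swap[of w1 w2] cost2_swap[of w1 w2])

lemma NE_swap: "is_NE w1 w2 \<alpha> \<beta> Acts A \<longleftrightarrow> is_NE w2 w1 \<alpha> \<beta> Acts (prod.swap A)"
  by (cases A) (auto simp: is_NE_def cost1_swap[of w1 w2] cost2_swap[of w1 w2])

lemma opt_swap: "opt_cost w1 w2 \<alpha> \<beta> Acts = opt_cost w2 w1 \<alpha> \<beta> Acts"
proof -
  have "social_cost w1 w2 \<alpha> \<beta> ` (Acts \<times> Acts) = social_cost w2 w1 \<alpha> \<beta> ` (Acts \<times> Acts)"
  proof -
    have "social_cost w1 w2 \<alpha> \<beta> ` (Acts \<times> Acts) = social_cost w2 w1 \<alpha> \<beta> ` (prod.swap ` (Acts \<times> Acts))"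
      by (simp add: image_image social_swap[of w1 w2])
    also have "prod.swap ` (Acts \<times> Acts) = Acts \<times> Acts" by auto
    finally show ?thesis .
  qed
  then show ?thesis by (simp add: opt_cost_def)
qed

lemma poa_instance_swap: "poa_instance w1 w2 \<alpha> \<beta> Acts = poa_instance w2 w1 \<alpha> \<beta> Acts"
proof -
  have "{ereal (social_cost w1 w2 \<alpha> \<beta> A / opt_cost w1 w2 \<alpha> \<beta> Acts) | A. is_NE w1 w2 \<alpha> \<beta> Acts A}
      = {ereal (social_cost w2 w1 \<alpha> \<beta> A / opt_cost w2 w1 \<alpha> \<beta> Acts) | A. is_NE w2 w1 \<alpha> \<beta> Acts A}"
  proof (intro equalityI subsetI)
    fix v assume "v \<in> {ereal (social_cost w1 w2 \<alpha> \<beta> A / opt_cost w1 w2 \<alpha> \<beta> Acts) | A. is_NE w1 w2 \<alpha> \<beta> Acts A}"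
    then obtain A where "v = ereal (social_cost w1 w2 \<alpha> \<beta> A / opt_cost w1 w2 \<alpha> \<beta> Acts)" "is_NE w1 w2 \<alpha> \<beta> Acts A" by blast
    then show "v \<in> {ereal (social_cost w2 w1 \<alpha> \<beta> A / opt_cost w2 w1 \<alpha> \<beta> Acts) | A. is_NE w2 w1 \<alpha> \<beta> Acts A}"
      by (intro CollectI exI[of _ "prod.swap A"]) (simp add: social_swap[of w1 w2] opt_swap[of w1 w2] NE_swap[of w1 w2])
  next
    fix v assume "v \<in> {ereal (social_cost w2 w1 \<alpha> \<beta> A / opt_cost w2 w1 \<alpha> \<beta> Acts) | A. is_NE w2 w1 \<alpha> \<beta> Acts A}"
    then obtain A where "v = ereal (social_cost w2 w1 \<alpha> \<beta> A / opt_cost w2 w1 \<alpha> \<beta> Acts)" "is_NE w2 w1 \<alpha> \<beta> Acts A" by blast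
    then show "v \<in> {ereal (social_cost w1 w2 \<alpha> \<beta> A / opt_cost w1 w2 \<alpha> \<beta> Acts) | A. is_NE w1 w2 \<alpha> \<beta> Acts A}"
      by (intro CollectI exI[of _ "prod.swap A"]) (simp add: social_swap[of w2 w1] opt_swap[of w2 w1] NE_swap[of w2 w1])
  qed
  then show ?thesis by (simp add: poa_instance_def)
qed

lemma poa_class_swap: "poa_class w1 w2 G = poa_class w2 w1 G"
  unfolding poa_class_def by (simp add: poa_instance_swap[of w1 w2] opt_swap[of w1 w2])

definition ind :: "nat set \<Rightarrow> nat \<Rightarrow> real" where "ind X r = (if r \<in> X then 1 else 0)"

definition c1 :: "real \<Rightarrow> real \<Rightarrow> real \<Rightarrow> real \<Rightarrow> real \<Rightarrow> real \<Rightarrow> real" where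
  "c1 x y a b al be = x*a*(al + be*(x*a + y*b))"
definition c2 :: "real \<Rightarrow> real \<Rightarrow> real \<Rightarrow> real \<Rightarrow> real \<Rightarrow> real \<Rightarrow> real" where
  "c2 x y a b al be = y*b*(al + be*(x*a + y*b))"

lemma cost1_sum:
  assumes "finite U" "X \<subseteq> U" "Y \<subseteq> U"
  shows "cost1 x y \<alpha> \<beta> (X,Y) = (\<Sum>r\<in>U. c1 x y (ind X r) (ind Y r) (\<alpha> r) (\<beta> r))"
proof -
  have "(\<Sum>r\<in>U. c1 x y (ind X r) (ind Y r) (\<alpha> r) (\<beta> r)) = (\<Sum>r\<in>X. c1 x y (ind X r) (ind Y r) (\<alpha> r) (\<beta> r))"
    using assms by (intro sum.mono_neutral_right) (auto simp: c1_def ind_def)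
  also have "\<dots> = (\<Sum>r\<in>X. x * (\<alpha> r + \<beta> r * load x y (X,Y) r))"
    by (intro sum.cong) (auto simp: c1_def ind_def load_def)
  also have "\<dots> = cost1 x y \<alpha> \<beta> (X,Y)" by (simp add: cost1_def sum_distrib_left)
  finally show ?thesis by simp
qed

lemma cost2_sum:
  assumes "finite U" "X \<subseteq> U" "Y \<subseteq> U"
  shows "cost2 x y \<alpha> \<beta> (X,Y) = (\<Sum>r\<in>U. c2 x y (ind X r) (ind Y r) (\<alpha> r) (\<beta> r))"
proof -
  have "(\<Sum>r\<in>U. c2 x y (ind X r) (ind Y r) (\<alpha> r) (\<beta> r)) = (\<Sum>r\<in>Y. c2 x y (ind X r) (ind Y r) (\<alpha> r) (\<beta> r))"
    using assms by (intro sum.mono_neutral_right) (auto simp: c2_def ind_def)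
  also have "\<dots> = (\<Sum>r\<in>Y. y * (\<alpha> r + \<beta> r * load x y (X,Y) r))"
    by (intro sum.cong) (auto simp: c2_def ind_def load_def)
  also have "\<dots> = cost2 x y \<alpha> \<beta> (X,Y)" by (simp add: cost2_def sum_distrib_left)
  finally show ?thesis by simp
qed

definition Gcomb :: "real \<Rightarrow> real \<Rightarrow> real \<Rightarrow> real \<Rightarrow> real \<Rightarrow> real \<Rightarrow> real \<Rightarrow> real \<Rightarrow>
    real \<Rightarrow> real \<Rightarrow> real \<Rightarrow> real \<Rightarrow> real \<Rightarrow> real \<Rightarrow> real" where
  "Gcomb x y D N m1 m2 m3 m4 a1 a2 b1 b2 al be =
     D * (c1 x y a1 a2 al be + c2 x y a1 a2 al be) - N * (c1 x y b1 b2 al be + c2 x y b1 b2 al be)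
     + m1 * (c1 x y b1 a2 al be - c1 x y a1 a2 al be) + m2 * (c1 x y b2 a2 al be - c1 x y a1 a2 al be)
     + m3 * (c2 x y a1 b1 al be - c2 x y a1 a2 al be) + m4 * (c2 x y a1 b2 al be - c2 x y a1 a2 al be)"

lemma comb_bound:
  assumes U: "finite U" "A1 \<subseteq> U" "A2 \<subseteq> U" "B1 \<subseteq> U" "B2 \<subseteq> U"
    and m: "0 \<le> m1" "0 \<le> m2" "0 \<le> m3" "0 \<le> m4"
    and ne1: "cost1 x y \<alpha> \<beta> (A1,A2) \<le> cost1 x y \<alpha> \<beta> (B1,A2)"
    and ne2: "cost1 x y \<alpha> \<beta> (A1,A2) \<le> cost1 x y \<alpha> \<beta> (B2,A2)"
    and ne3: "cost2 x y \<alpha> \<beta> (A1,A2) \<le> cost2 x y \<alpha> \<beta> (A1,B1)"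
    and ne4: "cost2 x y \<alpha> \<beta> (A1,A2) \<le> cost2 x y \<alpha> \<beta> (A1,B2)"
    and pt: "\<And>r. r \<in> U \<Longrightarrow> Gcomb x y D N m1 m2 m3 m4 (ind A1 r) (ind A2 r) (ind B1 r) (ind B2 r) (\<alpha> r) (\<beta> r) \<le> 0"
  shows "D * social_cost x y \<alpha> \<beta> (A1,A2) \<le> N * social_cost x y \<alpha> \<beta> (B1,B2)"
proof -
  let ?G = "\<lambda>r. Gcomb x y D N m1 m2 m3 m4 (ind A1 r) (ind A2 r) (ind B1 r) (ind B2 r) (\<alpha> r) (\<beta> r)"
  have "(\<Sum>r\<in>U. ?G r) = D * social_cost x y \<alpha> \<beta> (A1,A2) - N * social_cost x y \<alpha> \<beta> (B1,B2)
     + m1 * (cost1 x y \<alpha> \<beta> (B1,A2) - cost1 x y \<alpha> \<beta> (A1,A2))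
     + m2 * (cost1 x y \<alpha> \<beta> (B2,A2) - cost1 x y \<alpha> \<beta> (A1,A2))
     + m3 * (cost2 x y \<alpha> \<beta> (A1,B1) - cost2 x y \<alpha> \<beta> (A1,A2))
     + m4 * (cost2 x y \<alpha> \<beta> (A1,B2) - cost2 x y \<alpha> \<beta> (A1,A2))"
    unfolding social_cost_def
    using U
    by (simp add: cost1_sum[OF U(1)] cost2_sum[OF U(1)] Gcomb_def sum.distrib sum_subtractf sum_distrib_left right_diff_distrib distrib_left)
  moreover have "(\<Sum>r\<in>U. ?G r) \<le> 0" using pt by (intro sum_nonpos) auto
  moreover have "0 \<le> m1 * (cost1 x y \<alpha> \<beta> (B1,A2) - cost1 x y \<alpha> \<beta> (A1,A2))" using m ne1 by simp
  moreover have "0 \<le> m2 * (cost1 x y \<alpha> \<beta> (B2,A2) - cost1 x y \<alpha> \<beta> (A1,A2))" using m ne2 by simp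
  moreover have "0 \<le> m3 * (cost2 x y \<alpha> \<beta> (A1,B1) - cost2 x y \<alpha> \<beta> (A1,A2))" using m ne3 by simp
  moreover have "0 \<le> m4 * (cost2 x y \<alpha> \<beta> (A1,B2) - cost2 x y \<alpha> \<beta> (A1,A2))" using m ne4 by simp
  ultimately show ?thesis by linarith
qed

definition DA :: "real \<Rightarrow> real \<Rightarrow> real" where "DA x y = (2*x^4 + 3*x^3*y + 4*x^2*y^2 + 4*x*y^3 + 2*y^4)"
definition NA :: "real \<Rightarrow> real \<Rightarrow> real" where "NA x y = (2*x^4 + 6*x^3*y + 8*x^2*y^2 + 6*x*y^3 + 2*y^4)"
definition mA1 :: "real \<Rightarrow> real \<Rightarrow> real" where "mA1 x y = (2*x^4 + 4*x^3*y + 3*x^2*y^2)"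
definition mA2 :: "real \<Rightarrow> real \<Rightarrow> real" where "mA2 x y = (3*x^2*y^2 + 4*x*y^3 + 2*y^4)"
definition mA3 :: "real \<Rightarrow> real \<Rightarrow> real" where "mA3 x y = (3*x^4 + 4*x^3*y + 2*x^2*y^2)"
definition mA4 :: "real \<Rightarrow> real \<Rightarrow> real" where "mA4 x y = (x^4 + 2*x^2*y^2 + 4*x*y^3 + 2*y^4)"
definition DB :: "real \<Rightarrow> real \<Rightarrow> real" where "DB x y = (4*x^6 + 4*x^5*y + 5*x^4*y^2 + 8*x^3*y^3 + 5*x^2*y^4 + x*y^5)"
definition NB :: "real \<Rightarrow> real \<Rightarrow> real" where "NB x y = (4*x^6 + 10*x^5*y + 12*x^4*y^2 + 8*x^3*y^3 + 2*x^2*y^4)"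
definition mB1 :: "real \<Rightarrow> real \<Rightarrow> real" where "mB1 x y = (4*x^6 + 6*x^5*y + 4*x^4*y^2 + x^3*y^3 - 2*x^2*y^4 - 3*x*y^5 - y^6)"
definition mB2 :: "real \<Rightarrow> real \<Rightarrow> real" where "mB2 x y = (2*x^4*y^2 + 9*x^3*y^3 + 10*x^2*y^4 + 5*x*y^5 + y^6)"
definition mB3 :: "real \<Rightarrow> real \<Rightarrow> real" where "mB3 x y = (2*x^6 + 5*x^5*y + 12*x^4*y^2 + 15*x^3*y^3 + 9*x^2*y^4 + 2*x*y^5)"
definition mB4 :: "real \<Rightarrow> real \<Rightarrow> real" where "mB4 x y = (2*x^6 + x^5*y + 2*x^4*y^2 + 3*x^3*y^3 + x^2*y^4)"

lemma ptA_0000: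
  assumes d: "0 \<le> d" and y: "0 \<le> y" and al: "0 \<le> al" and be: "0 \<le> be" and xd: "x = y + d" and q: "(x^3 - x^2*y - 2*x*y^2 - y^3) \<le> 0"
  shows "Gcomb x y (DA x y) (NA x y) (mA1 x y) (mA2 x y) (mA3 x y) (mA4 x y) 0 0 0 0 al be \<le> 0"
proof -
  have x: "0 \<le> x" using xd d y by simp
  have e: "Gcomb x y (DA x y) (NA x y) (mA1 x y) (mA2 x y) (mA3 x y) (mA4 x y) 0 0 0 0 al be = -(al * 0 + be * 0)"
    unfolding Gcomb_def c1_def c2_def DA_def NA_def mA1_def mA2_def mA3_def mA4_def xd by algebra
  have p0: "0 \<le> (0::real)"
    by simp
  have p1: "0 \<le> (0::real)"
    by simp
  have "0 \<le> al * (0::real)" using al p0 by (rule mult_nonneg_nonneg)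
  moreover have "0 \<le> be * (0::real)" using be p1 by (rule mult_nonneg_nonneg)
  ultimately show ?thesis unfolding e by linarith
qed

lemma ptA_0001:
  assumes d: "0 \<le> d" and y: "0 \<le> y" and al: "0 \<le> al" and be: "0 \<le> be" and xd: "x = y + d" and q: "(x^3 - x^2*y - 2*x*y^2 - y^3) \<le> 0"
  shows "Gcomb x y (DA x y) (NA x y) (mA1 x y) (mA2 x y) (mA3 x y) (mA4 x y) 0 0 0 1 al be \<le> 0"
proof -
  have x: "0 \<le> x" using xd d y by simp
  define nq where "nq = -(x^3 - x^2*y - 2*x*y^2 - y^3)"
  define pq where "pq = (x^3 - x^2*y - 2*x*y^2 - y^3)"
  have nq: "0 \<le> nq" using q unfolding nq_def pq_def by simp
  have e: "Gcomb x y (DA x y) (NA x y) (mA1 x y) (mA2 x y) (mA3 x y) (mA4 x y) 0 0 0 1 al be = -(al * (d^4*y + 7*d^3*y^2 + 17*d^2*y^3 + 17*d*y^4 + 6*y^5) + be * (2*x*y^2*nq))"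
    unfolding Gcomb_def c1_def c2_def DA_def NA_def mA1_def mA2_def mA3_def mA4_def nq_def pq_def xd by algebra
  have p0: "0 \<le> (d^4*y + 7*d^3*y^2 + 17*d^2*y^3 + 17*d*y^4 + 6*y^5)"
    using nq x y d by (intro add_nonneg_nonneg mult_nonneg_nonneg zero_le_power; simp)
  have p1: "0 \<le> (2*x*y^2*nq)"
    using nq x y d by (intro add_nonneg_nonneg mult_nonneg_nonneg zero_le_power; simp)
  have "0 \<le> al * (d^4*y + 7*d^3*y^2 + 17*d^2*y^3 + 17*d*y^4 + 6*y^5)" using al p0 by (rule mult_nonneg_nonneg)
  moreover have "0 \<le> be * (2*x*y^2*nq)" using be p1 by (rule mult_nonneg_nonneg)
  ultimately show ?thesis unfolding e by linarith
qed

lemma ptA_0010: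
  assumes d: "0 \<le> d" and y: "0 \<le> y" and al: "0 \<le> al" and be: "0 \<le> be" and xd: "x = y + d" and q: "(x^3 - x^2*y - 2*x*y^2 - y^3) \<le> 0"
  shows "Gcomb x y (DA x y) (NA x y) (mA1 x y) (mA2 x y) (mA3 x y) (mA4 x y) 0 0 1 0 al be \<le> 0"
proof -
  have x: "0 \<le> x" using xd d y by simp
  define nq where "nq = -(x^3 - x^2*y - 2*x*y^2 - y^3)"
  define pq where "pq = (x^3 - x^2*y - 2*x*y^2 - y^3)"
  have nq: "0 \<le> nq" using q unfolding nq_def pq_def by simp
  have e: "Gcomb x y (DA x y) (NA x y) (mA1 x y) (mA2 x y) (mA3 x y) (mA4 x y) 0 0 1 0 al be = -(al * (x*y*(nq + 2*x*y^2 + y^3)) + be * (2*d^5*y + 12*d^4*y^2 + 30*d^3*y^3 + 38*d^2*y^4 + 24*d*y^5 + 6*y^6))"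
    unfolding Gcomb_def c1_def c2_def DA_def NA_def mA1_def mA2_def mA3_def mA4_def nq_def pq_def xd by algebra
  have p0: "0 \<le> (x*y*(nq + 2*x*y^2 + y^3))"
    using nq x y d by (intro add_nonneg_nonneg mult_nonneg_nonneg zero_le_power; simp)
  have p1: "0 \<le> (2*d^5*y + 12*d^4*y^2 + 30*d^3*y^3 + 38*d^2*y^4 + 24*d*y^5 + 6*y^6)"
    using nq x y d by (intro add_nonneg_nonneg mult_nonneg_nonneg zero_le_power; simp)
  have "0 \<le> al * (x*y*(nq + 2*x*y^2 + y^3))" using al p0 by (rule mult_nonneg_nonneg)
  moreover have "0 \<le> be * (2*d^5*y + 12*d^4*y^2 + 30*d^3*y^3 + 38*d^2*y^4 + 24*d*y^5 + 6*y^6)" using be p1 by (rule mult_nonneg_nonneg)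
  ultimately show ?thesis unfolding e by linarith
qed

lemma ptA_0011:
  assumes d: "0 \<le> d" and y: "0 \<le> y" and al: "0 \<le> al" and be: "0 \<le> be" and xd: "x = y + d" and q: "(x^3 - x^2*y - 2*x*y^2 - y^3) \<le> 0"
  shows "Gcomb x y (DA x y) (NA x y) (mA1 x y) (mA2 x y) (mA3 x y) (mA4 x y) 0 0 1 1 al be \<le> 0"
proof -
  have x: "0 \<le> x" using xd d y by simp
  have e: "Gcomb x y (DA x y) (NA x y) (mA1 x y) (mA2 x y) (mA3 x y) (mA4 x y) 0 0 1 1 al be = -(al * (4*d^3*y^2 + 18*d^2*y^3 + 26*d*y^4 + 12*y^5) + be * (6*d^5*y + 42*d^4*y^2 + 128*d^3*y^3 + 208*d^2*y^4 + 176*d*y^5 + 60*y^6))"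
    unfolding Gcomb_def c1_def c2_def DA_def NA_def mA1_def mA2_def mA3_def mA4_def xd by algebra
  have p0: "0 \<le> (4*d^3*y^2 + 18*d^2*y^3 + 26*d*y^4 + 12*y^5)"
    using x y d by (intro add_nonneg_nonneg mult_nonneg_nonneg zero_le_power; simp)
  have p1: "0 \<le> (6*d^5*y + 42*d^4*y^2 + 128*d^3*y^3 + 208*d^2*y^4 + 176*d*y^5 + 60*y^6)"
    using x y d by (intro add_nonneg_nonneg mult_nonneg_nonneg zero_le_power; simp)
  have "0 \<le> al * (4*d^3*y^2 + 18*d^2*y^3 + 26*d*y^4 + 12*y^5)" using al p0 by (rule mult_nonneg_nonneg)
  moreover have "0 \<le> be * (6*d^5*y + 42*d^4*y^2 + 128*d^3*y^3 + 208*d^2*y^4 + 176*d*y^5 + 60*y^6)" using be p1 by (rule mult_nonneg_nonneg)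
  ultimately show ?thesis unfolding e by linarith
qed

lemma ptA_0100:
  assumes d: "0 \<le> d" and y: "0 \<le> y" and al: "0 \<le> al" and be: "0 \<le> be" and xd: "x = y + d" and q: "(x^3 - x^2*y - 2*x*y^2 - y^3) \<le> 0"
  shows "Gcomb x y (DA x y) (NA x y) (mA1 x y) (mA2 x y) (mA3 x y) (mA4 x y) 0 1 0 0 al be \<le> 0"
proof -
  have x: "0 \<le> x" using xd d y by simp
  have e: "Gcomb x y (DA x y) (NA x y) (mA1 x y) (mA2 x y) (mA3 x y) (mA4 x y) 0 1 0 0 al be = -(al * (2*d^4*y + 9*d^3*y^2 + 15*d^2*y^3 + 11*d*y^4 + 3*y^5) + be * (2*d^4*y^2 + 9*d^3*y^3 + 15*d^2*y^4 + 11*d*y^5 + 3*y^6))"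
    unfolding Gcomb_def c1_def c2_def DA_def NA_def mA1_def mA2_def mA3_def mA4_def xd by algebra
  have p0: "0 \<le> (2*d^4*y + 9*d^3*y^2 + 15*d^2*y^3 + 11*d*y^4 + 3*y^5)"
    using x y d by (intro add_nonneg_nonneg mult_nonneg_nonneg zero_le_power; simp)
  have p1: "0 \<le> (2*d^4*y^2 + 9*d^3*y^3 + 15*d^2*y^4 + 11*d*y^5 + 3*y^6)"
    using x y d by (intro add_nonneg_nonneg mult_nonneg_nonneg zero_le_power; simp)
  have "0 \<le> al * (2*d^4*y + 9*d^3*y^2 + 15*d^2*y^3 + 11*d*y^4 + 3*y^5)" using al p0 by (rule mult_nonneg_nonneg)
  moreover have "0 \<le> be * (2*d^4*y^2 + 9*d^3*y^3 + 15*d^2*y^4 + 11*d*y^5 + 3*y^6)" using be p1 by (rule mult_nonneg_nonneg)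
  ultimately show ?thesis unfolding e by linarith
qed

lemma ptA_0101:
  assumes d: "0 \<le> d" and y: "0 \<le> y" and al: "0 \<le> al" and be: "0 \<le> be" and xd: "x = y + d" and q: "(x^3 - x^2*y - 2*x*y^2 - y^3) \<le> 0"
  shows "Gcomb x y (DA x y) (NA x y) (mA1 x y) (mA2 x y) (mA3 x y) (mA4 x y) 0 1 0 1 al be \<le> 0"
proof -
  have x: "0 \<le> x" using xd d y by simp
  have e: "Gcomb x y (DA x y) (NA x y) (mA1 x y) (mA2 x y) (mA3 x y) (mA4 x y) 0 1 0 1 al be = -(al * (3*d^4*y + 16*d^3*y^2 + 32*d^2*y^3 + 28*d*y^4 + 9*y^5) + be * 0)"
    unfolding Gcomb_def c1_def c2_def DA_def NA_def mA1_def mA2_def mA3_def mA4_def xd by algebra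
  have p0: "0 \<le> (3*d^4*y + 16*d^3*y^2 + 32*d^2*y^3 + 28*d*y^4 + 9*y^5)"
    using x y d by (intro add_nonneg_nonneg mult_nonneg_nonneg zero_le_power; simp)
  have p1: "0 \<le> (0::real)"
    by simp
  have "0 \<le> al * (3*d^4*y + 16*d^3*y^2 + 32*d^2*y^3 + 28*d*y^4 + 9*y^5)" using al p0 by (rule mult_nonneg_nonneg)
  moreover have "0 \<le> be * (0::real)" using be p1 by (rule mult_nonneg_nonneg)
  ultimately show ?thesis unfolding e by linarith
qed

lemma ptA_0110:
  assumes d: "0 \<le> d" and y: "0 \<le> y" and al: "0 \<le> al" and be: "0 \<le> be" and xd: "x = y + d" and q: "(x^3 - x^2*y - 2*x*y^2 - y^3) \<le> 0"
  shows "Gcomb x y (DA x y) (NA x y) (mA1 x y) (mA2 x y) (mA3 x y) (mA4 x y) 0 1 1 0 al be \<le> 0"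
proof -
  have x: "0 \<le> x" using xd d y by simp
  have e: "Gcomb x y (DA x y) (NA x y) (mA1 x y) (mA2 x y) (mA3 x y) (mA4 x y) 0 1 1 0 al be = -(al * (d^4*y + 6*d^3*y^2 + 16*d^2*y^3 + 20*d*y^4 + 9*y^5) + be * 0)"
    unfolding Gcomb_def c1_def c2_def DA_def NA_def mA1_def mA2_def mA3_def mA4_def xd by algebra
  have p0: "0 \<le> (d^4*y + 6*d^3*y^2 + 16*d^2*y^3 + 20*d*y^4 + 9*y^5)"
    using x y d by (intro add_nonneg_nonneg mult_nonneg_nonneg zero_le_power; simp)
  have p1: "0 \<le> (0::real)"
    by simp
  have "0 \<le> al * (d^4*y + 6*d^3*y^2 + 16*d^2*y^3 + 20*d*y^4 + 9*y^5)" using al p0 by (rule mult_nonneg_nonneg)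
  moreover have "0 \<le> be * (0::real)" using be p1 by (rule mult_nonneg_nonneg)
  ultimately show ?thesis unfolding e by linarith
qed

lemma ptA_0111:
  assumes d: "0 \<le> d" and y: "0 \<le> y" and al: "0 \<le> al" and be: "0 \<le> be" and xd: "x = y + d" and q: "(x^3 - x^2*y - 2*x*y^2 - y^3) \<le> 0"
  shows "Gcomb x y (DA x y) (NA x y) (mA1 x y) (mA2 x y) (mA3 x y) (mA4 x y) 0 1 1 1 al be \<le> 0"
proof -
  have x: "0 \<le> x" using xd d y by simp
  have e: "Gcomb x y (DA x y) (NA x y) (mA1 x y) (mA2 x y) (mA3 x y) (mA4 x y) 0 1 1 1 al be = -(al * (2*d^4*y + 13*d^3*y^2 + 33*d^2*y^3 + 37*d*y^4 + 15*y^5) + be * (4*d^5*y + 30*d^4*y^2 + 95*d^3*y^3 + 157*d^2*y^4 + 133*d*y^5 + 45*y^6))"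
    unfolding Gcomb_def c1_def c2_def DA_def NA_def mA1_def mA2_def mA3_def mA4_def xd by algebra
  have p0: "0 \<le> (2*d^4*y + 13*d^3*y^2 + 33*d^2*y^3 + 37*d*y^4 + 15*y^5)"
    using x y d by (intro add_nonneg_nonneg mult_nonneg_nonneg zero_le_power; simp)
  have p1: "0 \<le> (4*d^5*y + 30*d^4*y^2 + 95*d^3*y^3 + 157*d^2*y^4 + 133*d*y^5 + 45*y^6)"
    using x y d by (intro add_nonneg_nonneg mult_nonneg_nonneg zero_le_power; simp)
  have "0 \<le> al * (2*d^4*y + 13*d^3*y^2 + 33*d^2*y^3 + 37*d*y^4 + 15*y^5)" using al p0 by (rule mult_nonneg_nonneg)
  moreover have "0 \<le> be * (4*d^5*y + 30*d^4*y^2 + 95*d^3*y^3 + 157*d^2*y^4 + 133*d*y^5 + 45*y^6)" using be p1 by (rule mult_nonneg_nonneg)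
  ultimately show ?thesis unfolding e by linarith
qed

lemma ptA_1000:
  assumes d: "0 \<le> d" and y: "0 \<le> y" and al: "0 \<le> al" and be: "0 \<le> be" and xd: "x = y + d" and q: "(x^3 - x^2*y - 2*x*y^2 - y^3) \<le> 0"
  shows "Gcomb x y (DA x y) (NA x y) (mA1 x y) (mA2 x y) (mA3 x y) (mA4 x y) 1 0 0 0 al be \<le> 0"
proof -
  have x: "0 \<le> x" using xd d y by simp
  have e: "Gcomb x y (DA x y) (NA x y) (mA1 x y) (mA2 x y) (mA3 x y) (mA4 x y) 1 0 0 0 al be = -(al * (d^4*y + 6*d^3*y^2 + 12*d^2*y^3 + 10*d*y^4 + 3*y^5) + be * (d^5*y + 7*d^4*y^2 + 18*d^3*y^3 + 22*d^2*y^4 + 13*d*y^5 + 3*y^6))"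
    unfolding Gcomb_def c1_def c2_def DA_def NA_def mA1_def mA2_def mA3_def mA4_def xd by algebra
  have p0: "0 \<le> (d^4*y + 6*d^3*y^2 + 12*d^2*y^3 + 10*d*y^4 + 3*y^5)"
    using x y d by (intro add_nonneg_nonneg mult_nonneg_nonneg zero_le_power; simp)
  have p1: "0 \<le> (d^5*y + 7*d^4*y^2 + 18*d^3*y^3 + 22*d^2*y^4 + 13*d*y^5 + 3*y^6)"
    using x y d by (intro add_nonneg_nonneg mult_nonneg_nonneg zero_le_power; simp)
  have "0 \<le> al * (d^4*y + 6*d^3*y^2 + 12*d^2*y^3 + 10*d*y^4 + 3*y^5)" using al p0 by (rule mult_nonneg_nonneg)
  moreover have "0 \<le> be * (d^5*y + 7*d^4*y^2 + 18*d^3*y^3 + 22*d^2*y^4 + 13*d*y^5 + 3*y^6)" using be p1 by (rule mult_nonneg_nonneg)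
  ultimately show ?thesis unfolding e by linarith
qed

lemma ptA_1001:
  assumes d: "0 \<le> d" and y: "0 \<le> y" and al: "0 \<le> al" and be: "0 \<le> be" and xd: "x = y + d" and q: "(x^3 - x^2*y - 2*x*y^2 - y^3) \<le> 0"
  shows "Gcomb x y (DA x y) (NA x y) (mA1 x y) (mA2 x y) (mA3 x y) (mA4 x y) 1 0 0 1 al be \<le> 0"
proof -
  have x: "0 \<le> x" using xd d y by simp
  have e: "Gcomb x y (DA x y) (NA x y) (mA1 x y) (mA2 x y) (mA3 x y) (mA4 x y) 1 0 0 1 al be = -(al * (2*d^4*y + 13*d^3*y^2 + 29*d^2*y^3 + 27*d*y^4 + 9*y^5) + be * 0)"
    unfolding Gcomb_def c1_def c2_def DA_def NA_def mA1_def mA2_def mA3_def mA4_def xd by algebra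
  have p0: "0 \<le> (2*d^4*y + 13*d^3*y^2 + 29*d^2*y^3 + 27*d*y^4 + 9*y^5)"
    using x y d by (intro add_nonneg_nonneg mult_nonneg_nonneg zero_le_power; simp)
  have p1: "0 \<le> (0::real)"
    by simp
  have "0 \<le> al * (2*d^4*y + 13*d^3*y^2 + 29*d^2*y^3 + 27*d*y^4 + 9*y^5)" using al p0 by (rule mult_nonneg_nonneg)
  moreover have "0 \<le> be * (0::real)" using be p1 by (rule mult_nonneg_nonneg)
  ultimately show ?thesis unfolding e by linarith
qed

lemma ptA_1010:
  assumes d: "0 \<le> d" and y: "0 \<le> y" and al: "0 \<le> al" and be: "0 \<le> be" and xd: "x = y + d" and q: "(x^3 - x^2*y - 2*x*y^2 - y^3) \<le> 0"
  shows "Gcomb x y (DA x y) (NA x y) (mA1 x y) (mA2 x y) (mA3 x y) (mA4 x y) 1 0 1 0 al be \<le> 0"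
proof -
  have x: "0 \<le> x" using xd d y by simp
  have e: "Gcomb x y (DA x y) (NA x y) (mA1 x y) (mA2 x y) (mA3 x y) (mA4 x y) 1 0 1 0 al be = -(al * (3*d^3*y^2 + 13*d^2*y^3 + 19*d*y^4 + 9*y^5) + be * 0)"
    unfolding Gcomb_def c1_def c2_def DA_def NA_def mA1_def mA2_def mA3_def mA4_def xd by algebra
  have p0: "0 \<le> (3*d^3*y^2 + 13*d^2*y^3 + 19*d*y^4 + 9*y^5)"
    using x y d by (intro add_nonneg_nonneg mult_nonneg_nonneg zero_le_power; simp)
  have p1: "0 \<le> (0::real)"
    by simp
  have "0 \<le> al * (3*d^3*y^2 + 13*d^2*y^3 + 19*d*y^4 + 9*y^5)" using al p0 by (rule mult_nonneg_nonneg)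
  moreover have "0 \<le> be * (0::real)" using be p1 by (rule mult_nonneg_nonneg)
  ultimately show ?thesis unfolding e by linarith
qed

lemma ptA_1011:
  assumes d: "0 \<le> d" and y: "0 \<le> y" and al: "0 \<le> al" and be: "0 \<le> be" and xd: "x = y + d" and q: "(x^3 - x^2*y - 2*x*y^2 - y^3) \<le> 0"
  shows "Gcomb x y (DA x y) (NA x y) (mA1 x y) (mA2 x y) (mA3 x y) (mA4 x y) 1 0 1 1 al be \<le> 0"
proof -
  have x: "0 \<le> x" using xd d y by simp
  have e: "Gcomb x y (DA x y) (NA x y) (mA1 x y) (mA2 x y) (mA3 x y) (mA4 x y) 1 0 1 1 al be = -(al * (d^4*y + 10*d^3*y^2 + 30*d^2*y^3 + 36*d*y^4 + 15*y^5) + be * (3*d^5*y + 25*d^4*y^2 + 86*d^3*y^3 + 150*d^2*y^4 + 131*d*y^5 + 45*y^6))"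
    unfolding Gcomb_def c1_def c2_def DA_def NA_def mA1_def mA2_def mA3_def mA4_def xd by algebra
  have p0: "0 \<le> (d^4*y + 10*d^3*y^2 + 30*d^2*y^3 + 36*d*y^4 + 15*y^5)"
    using x y d by (intro add_nonneg_nonneg mult_nonneg_nonneg zero_le_power; simp)
  have p1: "0 \<le> (3*d^5*y + 25*d^4*y^2 + 86*d^3*y^3 + 150*d^2*y^4 + 131*d*y^5 + 45*y^6)"
    using x y d by (intro add_nonneg_nonneg mult_nonneg_nonneg zero_le_power; simp)
  have "0 \<le> al * (d^4*y + 10*d^3*y^2 + 30*d^2*y^3 + 36*d*y^4 + 15*y^5)" using al p0 by (rule mult_nonneg_nonneg)
  moreover have "0 \<le> be * (3*d^5*y + 25*d^4*y^2 + 86*d^3*y^3 + 150*d^2*y^4 + 131*d*y^5 + 45*y^6)" using be p1 by (rule mult_nonneg_nonneg)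
  ultimately show ?thesis unfolding e by linarith
qed

lemma ptA_1100:
  assumes d: "0 \<le> d" and y: "0 \<le> y" and al: "0 \<le> al" and be: "0 \<le> be" and xd: "x = y + d" and q: "(x^3 - x^2*y - 2*x*y^2 - y^3) \<le> 0"
  shows "Gcomb x y (DA x y) (NA x y) (mA1 x y) (mA2 x y) (mA3 x y) (mA4 x y) 1 1 0 0 al be \<le> 0"
proof -
  have x: "0 \<le> x" using xd d y by simp
  have e: "Gcomb x y (DA x y) (NA x y) (mA1 x y) (mA2 x y) (mA3 x y) (mA4 x y) 1 1 0 0 al be = -(al * (3*d^4*y + 15*d^3*y^2 + 27*d^2*y^3 + 21*d*y^4 + 6*y^5) + be * (3*d^5*y + 21*d^4*y^2 + 57*d^3*y^3 + 75*d^2*y^4 + 48*d*y^5 + 12*y^6))"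
    unfolding Gcomb_def c1_def c2_def DA_def NA_def mA1_def mA2_def mA3_def mA4_def xd by algebra
  have p0: "0 \<le> (3*d^4*y + 15*d^3*y^2 + 27*d^2*y^3 + 21*d*y^4 + 6*y^5)"
    using x y d by (intro add_nonneg_nonneg mult_nonneg_nonneg zero_le_power; simp)
  have p1: "0 \<le> (3*d^5*y + 21*d^4*y^2 + 57*d^3*y^3 + 75*d^2*y^4 + 48*d*y^5 + 12*y^6)"
    using x y d by (intro add_nonneg_nonneg mult_nonneg_nonneg zero_le_power; simp)
  have "0 \<le> al * (3*d^4*y + 15*d^3*y^2 + 27*d^2*y^3 + 21*d*y^4 + 6*y^5)" using al p0 by (rule mult_nonneg_nonneg)
  moreover have "0 \<le> be * (3*d^5*y + 21*d^4*y^2 + 57*d^3*y^3 + 75*d^2*y^4 + 48*d*y^5 + 12*y^6)" using be p1 by (rule mult_nonneg_nonneg)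
  ultimately show ?thesis unfolding e by linarith
qed

lemma ptA_1101:
  assumes d: "0 \<le> d" and y: "0 \<le> y" and al: "0 \<le> al" and be: "0 \<le> be" and xd: "x = y + d" and q: "(x^3 - x^2*y - 2*x*y^2 - y^3) \<le> 0"
  shows "Gcomb x y (DA x y) (NA x y) (mA1 x y) (mA2 x y) (mA3 x y) (mA4 x y) 1 1 0 1 al be \<le> 0"
proof -
  have x: "0 \<le> x" using xd d y by simp
  have e: "Gcomb x y (DA x y) (NA x y) (mA1 x y) (mA2 x y) (mA3 x y) (mA4 x y) 1 1 0 1 al be = -(al * (4*d^4*y + 22*d^3*y^2 + 44*d^2*y^3 + 38*d*y^4 + 12*y^5) + be * (2*d^5*y + 14*d^4*y^2 + 36*d^3*y^3 + 40*d^2*y^4 + 16*d*y^5))"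
    unfolding Gcomb_def c1_def c2_def DA_def NA_def mA1_def mA2_def mA3_def mA4_def xd by algebra
  have p0: "0 \<le> (4*d^4*y + 22*d^3*y^2 + 44*d^2*y^3 + 38*d*y^4 + 12*y^5)"
    using x y d by (intro add_nonneg_nonneg mult_nonneg_nonneg zero_le_power; simp)
  have p1: "0 \<le> (2*d^5*y + 14*d^4*y^2 + 36*d^3*y^3 + 40*d^2*y^4 + 16*d*y^5)"
    using x y d by (intro add_nonneg_nonneg mult_nonneg_nonneg zero_le_power; simp)
  have "0 \<le> al * (4*d^4*y + 22*d^3*y^2 + 44*d^2*y^3 + 38*d*y^4 + 12*y^5)" using al p0 by (rule mult_nonneg_nonneg)
  moreover have "0 \<le> be * (2*d^5*y + 14*d^4*y^2 + 36*d^3*y^3 + 40*d^2*y^4 + 16*d*y^5)" using be p1 by (rule mult_nonneg_nonneg)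
  ultimately show ?thesis unfolding e by linarith
qed

lemma ptA_1110:
  assumes d: "0 \<le> d" and y: "0 \<le> y" and al: "0 \<le> al" and be: "0 \<le> be" and xd: "x = y + d" and q: "(x^3 - x^2*y - 2*x*y^2 - y^3) \<le> 0"
  shows "Gcomb x y (DA x y) (NA x y) (mA1 x y) (mA2 x y) (mA3 x y) (mA4 x y) 1 1 1 0 al be \<le> 0"
proof -
  have x: "0 \<le> x" using xd d y by simp
  have e: "Gcomb x y (DA x y) (NA x y) (mA1 x y) (mA2 x y) (mA3 x y) (mA4 x y) 1 1 1 0 al be = -(al * (2*d^4*y + 12*d^3*y^2 + 28*d^2*y^3 + 30*d*y^4 + 12*y^5) + be * 0)"
    unfolding Gcomb_def c1_def c2_def DA_def NA_def mA1_def mA2_def mA3_def mA4_def xd by algebra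
  have p0: "0 \<le> (2*d^4*y + 12*d^3*y^2 + 28*d^2*y^3 + 30*d*y^4 + 12*y^5)"
    using x y d by (intro add_nonneg_nonneg mult_nonneg_nonneg zero_le_power; simp)
  have p1: "0 \<le> (0::real)"
    by simp
  have "0 \<le> al * (2*d^4*y + 12*d^3*y^2 + 28*d^2*y^3 + 30*d*y^4 + 12*y^5)" using al p0 by (rule mult_nonneg_nonneg)
  moreover have "0 \<le> be * (0::real)" using be p1 by (rule mult_nonneg_nonneg)
  ultimately show ?thesis unfolding e by linarith
qed

lemma ptA_1111:
  assumes d: "0 \<le> d" and y: "0 \<le> y" and al: "0 \<le> al" and be: "0 \<le> be" and xd: "x = y + d" and q: "(x^3 - x^2*y - 2*x*y^2 - y^3) \<le> 0"
  shows "Gcomb x y (DA x y) (NA x y) (mA1 x y) (mA2 x y) (mA3 x y) (mA4 x y) 1 1 1 1 al be \<le> 0"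
proof -
  have x: "0 \<le> x" using xd d y by simp
  have e: "Gcomb x y (DA x y) (NA x y) (mA1 x y) (mA2 x y) (mA3 x y) (mA4 x y) 1 1 1 1 al be = -(al * (3*d^4*y + 19*d^3*y^2 + 45*d^2*y^3 + 47*d*y^4 + 18*y^5) + be * (3*d^5*y + 25*d^4*y^2 + 83*d^3*y^3 + 137*d^2*y^4 + 112*d*y^5 + 36*y^6))"
    unfolding Gcomb_def c1_def c2_def DA_def NA_def mA1_def mA2_def mA3_def mA4_def xd by algebra
  have p0: "0 \<le> (3*d^4*y + 19*d^3*y^2 + 45*d^2*y^3 + 47*d*y^4 + 18*y^5)"
    using x y d by (intro add_nonneg_nonneg mult_nonneg_nonneg zero_le_power; simp)
  have p1: "0 \<le> (3*d^5*y + 25*d^4*y^2 + 83*d^3*y^3 + 137*d^2*y^4 + 112*d*y^5 + 36*y^6)"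
    using x y d by (intro add_nonneg_nonneg mult_nonneg_nonneg zero_le_power; simp)
  have "0 \<le> al * (3*d^4*y + 19*d^3*y^2 + 45*d^2*y^3 + 47*d*y^4 + 18*y^5)" using al p0 by (rule mult_nonneg_nonneg)
  moreover have "0 \<le> be * (3*d^5*y + 25*d^4*y^2 + 83*d^3*y^3 + 137*d^2*y^4 + 112*d*y^5 + 36*y^6)" using be p1 by (rule mult_nonneg_nonneg)
  ultimately show ?thesis unfolding e by linarith
qed

lemma ptB_0000:
  assumes d: "0 \<le> d" and y: "0 \<le> y" and al: "0 \<le> al" and be: "0 \<le> be" and xd: "x = 2*y + d" and q: "0 \<le> (x^3 - x^2*y - 2*x*y^2 - y^3)"
  shows "Gcomb x y (DB x y) (NB x y) (mB1 x y) (mB2 x y) (mB3 x y) (mB4 x y) 0 0 0 0 al be \<le> 0"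
proof -
  have x: "0 \<le> x" using xd d y by simp
  have e: "Gcomb x y (DB x y) (NB x y) (mB1 x y) (mB2 x y) (mB3 x y) (mB4 x y) 0 0 0 0 al be = -(al * 0 + be * 0)"
    unfolding Gcomb_def c1_def c2_def DB_def NB_def mB1_def mB2_def mB3_def mB4_def xd by algebra
  have p0: "0 \<le> (0::real)"
    by simp
  have p1: "0 \<le> (0::real)"
    by simp
  have "0 \<le> al * (0::real)" using al p0 by (rule mult_nonneg_nonneg)
  moreover have "0 \<le> be * (0::real)" using be p1 by (rule mult_nonneg_nonneg)
  ultimately show ?thesis unfolding e by linarith
qed

lemma ptB_0001:
  assumes d: "0 \<le> d" and y: "0 \<le> y" and al: "0 \<le> al" and be: "0 \<le> be" and xd: "x = 2*y + d" and q: "0 \<le> (x^3 - x^2*y - 2*x*y^2 - y^3)"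
  shows "Gcomb x y (DB x y) (NB x y) (mB1 x y) (mB2 x y) (mB3 x y) (mB4 x y) 0 0 0 1 al be \<le> 0"
proof -
  have x: "0 \<le> x" using xd d y by simp
  have e: "Gcomb x y (DB x y) (NB x y) (mB1 x y) (mB2 x y) (mB3 x y) (mB4 x y) 0 0 0 1 al be = -(al * (2*d^6*y + 31*d^5*y^2 + 191*d^4*y^3 + 603*d^3*y^4 + 1030*d^2*y^5 + 899*d*y^6 + 310*y^7) + be * 0)"
    unfolding Gcomb_def c1_def c2_def DB_def NB_def mB1_def mB2_def mB3_def mB4_def xd by algebra
  have p0: "0 \<le> (2*d^6*y + 31*d^5*y^2 + 191*d^4*y^3 + 603*d^3*y^4 + 1030*d^2*y^5 + 899*d*y^6 + 310*y^7)"
    using x y d by (intro add_nonneg_nonneg mult_nonneg_nonneg zero_le_power; simp)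
  have p1: "0 \<le> (0::real)"
    by simp
  have "0 \<le> al * (2*d^6*y + 31*d^5*y^2 + 191*d^4*y^3 + 603*d^3*y^4 + 1030*d^2*y^5 + 899*d*y^6 + 310*y^7)" using al p0 by (rule mult_nonneg_nonneg)
  moreover have "0 \<le> be * (0::real)" using be p1 by (rule mult_nonneg_nonneg)
  ultimately show ?thesis unfolding e by linarith
qed

lemma ptB_0010:
  assumes d: "0 \<le> d" and y: "0 \<le> y" and al: "0 \<le> al" and be: "0 \<le> be" and xd: "x = 2*y + d" and q: "0 \<le> (x^3 - x^2*y - 2*x*y^2 - y^3)"
  shows "Gcomb x y (DB x y) (NB x y) (mB1 x y) (mB2 x y) (mB3 x y) (mB4 x y) 0 0 1 0 al be \<le> 0"
proof -
  have x: "0 \<le> x" using xd d y by simp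
  have e: "Gcomb x y (DB x y) (NB x y) (mB1 x y) (mB2 x y) (mB3 x y) (mB4 x y) 0 0 1 0 al be = -(al * (2*d^6*y + 27*d^5*y^2 + 145*d^4*y^3 + 389*d^3*y^4 + 528*d^2*y^5 + 307*d*y^6 + 30*y^7) + be * (4*d^7*y + 62*d^6*y^2 + 410*d^5*y^3 + 1492*d^4*y^4 + 3204*d^3*y^5 + 4016*d^2*y^6 + 2670*d*y^7 + 700*y^8))"
    unfolding Gcomb_def c1_def c2_def DB_def NB_def mB1_def mB2_def mB3_def mB4_def xd by algebra
  have p0: "0 \<le> (2*d^6*y + 27*d^5*y^2 + 145*d^4*y^3 + 389*d^3*y^4 + 528*d^2*y^5 + 307*d*y^6 + 30*y^7)"
    using x y d by (intro add_nonneg_nonneg mult_nonneg_nonneg zero_le_power; simp)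
  have p1: "0 \<le> (4*d^7*y + 62*d^6*y^2 + 410*d^5*y^3 + 1492*d^4*y^4 + 3204*d^3*y^5 + 4016*d^2*y^6 + 2670*d*y^7 + 700*y^8)"
    using x y d by (intro add_nonneg_nonneg mult_nonneg_nonneg zero_le_power; simp)
  have "0 \<le> al * (2*d^6*y + 27*d^5*y^2 + 145*d^4*y^3 + 389*d^3*y^4 + 528*d^2*y^5 + 307*d*y^6 + 30*y^7)" using al p0 by (rule mult_nonneg_nonneg)
  moreover have "0 \<le> be * (4*d^7*y + 62*d^6*y^2 + 410*d^5*y^3 + 1492*d^4*y^4 + 3204*d^3*y^5 + 4016*d^2*y^6 + 2670*d*y^7 + 700*y^8)" using be p1 by (rule mult_nonneg_nonneg)
  ultimately show ?thesis unfolding e by linarith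
qed

lemma ptB_0011:
  assumes d: "0 \<le> d" and y: "0 \<le> y" and al: "0 \<le> al" and be: "0 \<le> be" and xd: "x = 2*y + d" and q: "0 \<le> (x^3 - x^2*y - 2*x*y^2 - y^3)"
  shows "Gcomb x y (DB x y) (NB x y) (mB1 x y) (mB2 x y) (mB3 x y) (mB4 x y) 0 0 1 1 al be \<le> 0"
proof -
  have x: "0 \<le> x" using xd d y by simp
  have e: "Gcomb x y (DB x y) (NB x y) (mB1 x y) (mB2 x y) (mB3 x y) (mB4 x y) 0 0 1 1 al be = -(al * (4*d^6*y + 58*d^5*y^2 + 336*d^4*y^3 + 992*d^3*y^4 + 1558*d^2*y^5 + 1206*d*y^6 + 340*y^7) + be * (12*d^7*y + 194*d^6*y^2 + 1346*d^5*y^3 + 5188*d^4*y^4 + 11976*d^3*y^5 + 16520*d^2*y^6 + 12574*d*y^7 + 4060*y^8))"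
    unfolding Gcomb_def c1_def c2_def DB_def NB_def mB1_def mB2_def mB3_def mB4_def xd by algebra
  have p0: "0 \<le> (4*d^6*y + 58*d^5*y^2 + 336*d^4*y^3 + 992*d^3*y^4 + 1558*d^2*y^5 + 1206*d*y^6 + 340*y^7)"
    using x y d by (intro add_nonneg_nonneg mult_nonneg_nonneg zero_le_power; simp)
  have p1: "0 \<le> (12*d^7*y + 194*d^6*y^2 + 1346*d^5*y^3 + 5188*d^4*y^4 + 11976*d^3*y^5 + 16520*d^2*y^6 + 12574*d*y^7 + 4060*y^8)"
    using x y d by (intro add_nonneg_nonneg mult_nonneg_nonneg zero_le_power; simp)
  have "0 \<le> al * (4*d^6*y + 58*d^5*y^2 + 336*d^4*y^3 + 992*d^3*y^4 + 1558*d^2*y^5 + 1206*d*y^6 + 340*y^7)" using al p0 by (rule mult_nonneg_nonneg)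
  moreover have "0 \<le> be * (12*d^7*y + 194*d^6*y^2 + 1346*d^5*y^3 + 5188*d^4*y^4 + 11976*d^3*y^5 + 16520*d^2*y^6 + 12574*d*y^7 + 4060*y^8)" using be p1 by (rule mult_nonneg_nonneg)
  ultimately show ?thesis unfolding e by linarith
qed

lemma ptB_0100:
  assumes d: "0 \<le> d" and y: "0 \<le> y" and al: "0 \<le> al" and be: "0 \<le> be" and xd: "x = 2*y + d" and q: "0 \<le> (x^3 - x^2*y - 2*x*y^2 - y^3)"
  shows "Gcomb x y (DB x y) (NB x y) (mB1 x y) (mB2 x y) (mB3 x y) (mB4 x y) 0 1 0 0 al be \<le> 0"
proof -
  have x: "0 \<le> x" using xd d y by simp
  have e: "Gcomb x y (DB x y) (NB x y) (mB1 x y) (mB2 x y) (mB3 x y) (mB4 x y) 0 1 0 0 al be = -(al * (2*d^5*y^2 + 29*d^4*y^3 + 162*d^3*y^4 + 441*d^2*y^5 + 589*d*y^6 + 310*y^7) + be * (2*d^5*y^3 + 29*d^4*y^4 + 162*d^3*y^5 + 441*d^2*y^6 + 589*d*y^7 + 310*y^8))"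
    unfolding Gcomb_def c1_def c2_def DB_def NB_def mB1_def mB2_def mB3_def mB4_def xd by algebra
  have p0: "0 \<le> (2*d^5*y^2 + 29*d^4*y^3 + 162*d^3*y^4 + 441*d^2*y^5 + 589*d*y^6 + 310*y^7)"
    using x y d by (intro add_nonneg_nonneg mult_nonneg_nonneg zero_le_power; simp)
  have p1: "0 \<le> (2*d^5*y^3 + 29*d^4*y^4 + 162*d^3*y^5 + 441*d^2*y^6 + 589*d*y^7 + 310*y^8)"
    using x y d by (intro add_nonneg_nonneg mult_nonneg_nonneg zero_le_power; simp)
  have "0 \<le> al * (2*d^5*y^2 + 29*d^4*y^3 + 162*d^3*y^4 + 441*d^2*y^5 + 589*d*y^6 + 310*y^7)" using al p0 by (rule mult_nonneg_nonneg)
  moreover have "0 \<le> be * (2*d^5*y^3 + 29*d^4*y^4 + 162*d^3*y^5 + 441*d^2*y^6 + 589*d*y^7 + 310*y^8)" using be p1 by (rule mult_nonneg_nonneg)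
  ultimately show ?thesis unfolding e by linarith
qed

lemma ptB_0101:
  assumes d: "0 \<le> d" and y: "0 \<le> y" and al: "0 \<le> al" and be: "0 \<le> be" and xd: "x = 2*y + d" and q: "0 \<le> (x^3 - x^2*y - 2*x*y^2 - y^3)"
  shows "Gcomb x y (DB x y) (NB x y) (mB1 x y) (mB2 x y) (mB3 x y) (mB4 x y) 0 1 0 1 al be \<le> 0"
proof -
  have x: "0 \<le> x" using xd d y by simp
  have e: "Gcomb x y (DB x y) (NB x y) (mB1 x y) (mB2 x y) (mB3 x y) (mB4 x y) 0 1 0 1 al be = -(al * (2*d^6*y + 33*d^5*y^2 + 220*d^4*y^3 + 765*d^3*y^4 + 1471*d^2*y^5 + 1488*d*y^6 + 620*y^7) + be * 0)"
    unfolding Gcomb_def c1_def c2_def DB_def NB_def mB1_def mB2_def mB3_def mB4_def xd by algebra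
  have p0: "0 \<le> (2*d^6*y + 33*d^5*y^2 + 220*d^4*y^3 + 765*d^3*y^4 + 1471*d^2*y^5 + 1488*d*y^6 + 620*y^7)"
    using x y d by (intro add_nonneg_nonneg mult_nonneg_nonneg zero_le_power; simp)
  have p1: "0 \<le> (0::real)"
    by simp
  have "0 \<le> al * (2*d^6*y + 33*d^5*y^2 + 220*d^4*y^3 + 765*d^3*y^4 + 1471*d^2*y^5 + 1488*d*y^6 + 620*y^7)" using al p0 by (rule mult_nonneg_nonneg)
  moreover have "0 \<le> be * (0::real)" using be p1 by (rule mult_nonneg_nonneg)
  ultimately show ?thesis unfolding e by linarith
qed

lemma ptB_0110:
  assumes d: "0 \<le> d" and y: "0 \<le> y" and al: "0 \<le> al" and be: "0 \<le> be" and xd: "x = 2*y + d" and q: "0 \<le> (x^3 - x^2*y - 2*x*y^2 - y^3)"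
  shows "Gcomb x y (DB x y) (NB x y) (mB1 x y) (mB2 x y) (mB3 x y) (mB4 x y) 0 1 1 0 al be \<le> 0"
proof -
  have x: "0 \<le> x" using xd d y by simp
  have e: "Gcomb x y (DB x y) (NB x y) (mB1 x y) (mB2 x y) (mB3 x y) (mB4 x y) 0 1 1 0 al be = -(al * (2*d^6*y + 29*d^5*y^2 + 174*d^4*y^3 + 551*d^3*y^4 + 969*d^2*y^5 + 896*d*y^6 + 340*y^7) + be * 0)"
    unfolding Gcomb_def c1_def c2_def DB_def NB_def mB1_def mB2_def mB3_def mB4_def xd by algebra
  have p0: "0 \<le> (2*d^6*y + 29*d^5*y^2 + 174*d^4*y^3 + 551*d^3*y^4 + 969*d^2*y^5 + 896*d*y^6 + 340*y^7)"
    using x y d by (intro add_nonneg_nonneg mult_nonneg_nonneg zero_le_power; simp)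
  have p1: "0 \<le> (0::real)"
    by simp
  have "0 \<le> al * (2*d^6*y + 29*d^5*y^2 + 174*d^4*y^3 + 551*d^3*y^4 + 969*d^2*y^5 + 896*d*y^6 + 340*y^7)" using al p0 by (rule mult_nonneg_nonneg)
  moreover have "0 \<le> be * (0::real)" using be p1 by (rule mult_nonneg_nonneg)
  ultimately show ?thesis unfolding e by linarith
qed

lemma ptB_0111:
  assumes d: "0 \<le> d" and y: "0 \<le> y" and al: "0 \<le> al" and be: "0 \<le> be" and xd: "x = 2*y + d" and q: "0 \<le> (x^3 - x^2*y - 2*x*y^2 - y^3)"
  shows "Gcomb x y (DB x y) (NB x y) (mB1 x y) (mB2 x y) (mB3 x y) (mB4 x y) 0 1 1 1 al be \<le> 0"
proof -
  have x: "0 \<le> x" using xd d y by simp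
  have e: "Gcomb x y (DB x y) (NB x y) (mB1 x y) (mB2 x y) (mB3 x y) (mB4 x y) 0 1 1 1 al be = -(al * (4*d^6*y + 60*d^5*y^2 + 365*d^4*y^3 + 1154*d^3*y^4 + 1999*d^2*y^5 + 1795*d*y^6 + 650*y^7) + be * (8*d^7*y + 132*d^6*y^2 + 934*d^5*y^3 + 3667*d^4*y^4 + 8610*d^3*y^5 + 12063*d^2*y^6 + 9315*d*y^7 + 3050*y^8))"
    unfolding Gcomb_def c1_def c2_def DB_def NB_def mB1_def mB2_def mB3_def mB4_def xd by algebra
  have p0: "0 \<le> (4*d^6*y + 60*d^5*y^2 + 365*d^4*y^3 + 1154*d^3*y^4 + 1999*d^2*y^5 + 1795*d*y^6 + 650*y^7)"
    using x y d by (intro add_nonneg_nonneg mult_nonneg_nonneg zero_le_power; simp)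
  have p1: "0 \<le> (8*d^7*y + 132*d^6*y^2 + 934*d^5*y^3 + 3667*d^4*y^4 + 8610*d^3*y^5 + 12063*d^2*y^6 + 9315*d*y^7 + 3050*y^8)"
    using x y d by (intro add_nonneg_nonneg mult_nonneg_nonneg zero_le_power; simp)
  have "0 \<le> al * (4*d^6*y + 60*d^5*y^2 + 365*d^4*y^3 + 1154*d^3*y^4 + 1999*d^2*y^5 + 1795*d*y^6 + 650*y^7)" using al p0 by (rule mult_nonneg_nonneg)
  moreover have "0 \<le> be * (8*d^7*y + 132*d^6*y^2 + 934*d^5*y^3 + 3667*d^4*y^4 + 8610*d^3*y^5 + 12063*d^2*y^6 + 9315*d*y^7 + 3050*y^8)" using be p1 by (rule mult_nonneg_nonneg)
  ultimately show ?thesis unfolding e by linarith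
qed

lemma ptB_1000:
  assumes d: "0 \<le> d" and y: "0 \<le> y" and al: "0 \<le> al" and be: "0 \<le> be" and xd: "x = 2*y + d" and q: "0 \<le> (x^3 - x^2*y - 2*x*y^2 - y^3)"
  shows "Gcomb x y (DB x y) (NB x y) (mB1 x y) (mB2 x y) (mB3 x y) (mB4 x y) 1 0 0 0 al be \<le> 0"
proof -
  have x: "0 \<le> x" using xd d y by simp
  have e: "Gcomb x y (DB x y) (NB x y) (mB1 x y) (mB2 x y) (mB3 x y) (mB4 x y) 1 0 0 0 al be = -(al * (2*d^6*y + 25*d^5*y^2 + 132*d^4*y^3 + 379*d^3*y^4 + 627*d^2*y^5 + 568*d*y^6 + 220*y^7) + be * (2*d^7*y + 29*d^6*y^2 + 182*d^5*y^3 + 643*d^4*y^4 + 1385*d^3*y^5 + 1822*d^2*y^6 + 1356*d*y^7 + 440*y^8))"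
    unfolding Gcomb_def c1_def c2_def DB_def NB_def mB1_def mB2_def mB3_def mB4_def xd by algebra
  have p0: "0 \<le> (2*d^6*y + 25*d^5*y^2 + 132*d^4*y^3 + 379*d^3*y^4 + 627*d^2*y^5 + 568*d*y^6 + 220*y^7)"
    using x y d by (intro add_nonneg_nonneg mult_nonneg_nonneg zero_le_power; simp)
  have p1: "0 \<le> (2*d^7*y + 29*d^6*y^2 + 182*d^5*y^3 + 643*d^4*y^4 + 1385*d^3*y^5 + 1822*d^2*y^6 + 1356*d*y^7 + 440*y^8)"
    using x y d by (intro add_nonneg_nonneg mult_nonneg_nonneg zero_le_power; simp)
  have "0 \<le> al * (2*d^6*y + 25*d^5*y^2 + 132*d^4*y^3 + 379*d^3*y^4 + 627*d^2*y^5 + 568*d*y^6 + 220*y^7)" using al p0 by (rule mult_nonneg_nonneg)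
  moreover have "0 \<le> be * (2*d^7*y + 29*d^6*y^2 + 182*d^5*y^3 + 643*d^4*y^4 + 1385*d^3*y^5 + 1822*d^2*y^6 + 1356*d*y^7 + 440*y^8)" using be p1 by (rule mult_nonneg_nonneg)
  ultimately show ?thesis unfolding e by linarith
qed

lemma ptB_1001:
  assumes d: "0 \<le> d" and y: "0 \<le> y" and al: "0 \<le> al" and be: "0 \<le> be" and xd: "x = 2*y + d" and q: "0 \<le> (x^3 - x^2*y - 2*x*y^2 - y^3)"
  shows "Gcomb x y (DB x y) (NB x y) (mB1 x y) (mB2 x y) (mB3 x y) (mB4 x y) 1 0 0 1 al be \<le> 0"
proof -
  have x: "0 \<le> x" using xd d y by simp
  have e: "Gcomb x y (DB x y) (NB x y) (mB1 x y) (mB2 x y) (mB3 x y) (mB4 x y) 1 0 0 1 al be = -(al * (4*d^6*y + 56*d^5*y^2 + 323*d^4*y^3 + 982*d^3*y^4 + 1657*d^2*y^5 + 1467*d*y^6 + 530*y^7) + be * 0)"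
    unfolding Gcomb_def c1_def c2_def DB_def NB_def mB1_def mB2_def mB3_def mB4_def xd by algebra
  have p0: "0 \<le> (4*d^6*y + 56*d^5*y^2 + 323*d^4*y^3 + 982*d^3*y^4 + 1657*d^2*y^5 + 1467*d*y^6 + 530*y^7)"
    using x y d by (intro add_nonneg_nonneg mult_nonneg_nonneg zero_le_power; simp)
  have p1: "0 \<le> (0::real)"
    by simp
  have "0 \<le> al * (4*d^6*y + 56*d^5*y^2 + 323*d^4*y^3 + 982*d^3*y^4 + 1657*d^2*y^5 + 1467*d*y^6 + 530*y^7)" using al p0 by (rule mult_nonneg_nonneg)
  moreover have "0 \<le> be * (0::real)" using be p1 by (rule mult_nonneg_nonneg)
  ultimately show ?thesis unfolding e by linarith
qed

lemma ptB_1010: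
  assumes d: "0 \<le> d" and y: "0 \<le> y" and al: "0 \<le> al" and be: "0 \<le> be" and xd: "x = 2*y + d" and q: "0 \<le> (x^3 - x^2*y - 2*x*y^2 - y^3)"
  shows "Gcomb x y (DB x y) (NB x y) (mB1 x y) (mB2 x y) (mB3 x y) (mB4 x y) 1 0 1 0 al be \<le> 0"
proof -
  have x: "0 \<le> x" using xd d y by simp
  define nq where "nq = -(x^3 - x^2*y - 2*x*y^2 - y^3)"
  define pq where "pq = (x^3 - x^2*y - 2*x*y^2 - y^3)"
  have nq: "0 \<le> pq" using q unfolding nq_def pq_def by simp
  have e: "Gcomb x y (DB x y) (NB x y) (mB1 x y) (mB2 x y) (mB3 x y) (mB4 x y) 1 0 1 0 al be = -(al * (4*d^6*y + 52*d^5*y^2 + 277*d^4*y^3 + 768*d^3*y^4 + 1155*d^2*y^5 + 875*d*y^6 + 250*y^7) + be * (2*x*y*pq*(2*x^3+3*x^2*y+3*x*y^2+y^3)))"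
    unfolding Gcomb_def c1_def c2_def DB_def NB_def mB1_def mB2_def mB3_def mB4_def nq_def pq_def xd by algebra
  have p0: "0 \<le> (4*d^6*y + 52*d^5*y^2 + 277*d^4*y^3 + 768*d^3*y^4 + 1155*d^2*y^5 + 875*d*y^6 + 250*y^7)"
    using nq x y d by (intro add_nonneg_nonneg mult_nonneg_nonneg zero_le_power; simp)
  have p1: "0 \<le> (2*x*y*pq*(2*x^3+3*x^2*y+3*x*y^2+y^3))"
    using nq x y d by (intro add_nonneg_nonneg mult_nonneg_nonneg zero_le_power; simp)
  have "0 \<le> al * (4*d^6*y + 52*d^5*y^2 + 277*d^4*y^3 + 768*d^3*y^4 + 1155*d^2*y^5 + 875*d*y^6 + 250*y^7)" using al p0 by (rule mult_nonneg_nonneg)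
  moreover have "0 \<le> be * (2*x*y*pq*(2*x^3+3*x^2*y+3*x*y^2+y^3))" using be p1 by (rule mult_nonneg_nonneg)
  ultimately show ?thesis unfolding e by linarith
qed

lemma ptB_1011:
  assumes d: "0 \<le> d" and y: "0 \<le> y" and al: "0 \<le> al" and be: "0 \<le> be" and xd: "x = 2*y + d" and q: "0 \<le> (x^3 - x^2*y - 2*x*y^2 - y^3)"
  shows "Gcomb x y (DB x y) (NB x y) (mB1 x y) (mB2 x y) (mB3 x y) (mB4 x y) 1 0 1 1 al be \<le> 0"
proof -
  have x: "0 \<le> x" using xd d y by simp
  have e: "Gcomb x y (DB x y) (NB x y) (mB1 x y) (mB2 x y) (mB3 x y) (mB4 x y) 1 0 1 1 al be = -(al * (6*d^6*y + 83*d^5*y^2 + 468*d^4*y^3 + 1371*d^3*y^4 + 2185*d^2*y^5 + 1774*d*y^6 + 560*y^7) + be * (10*d^7*y + 161*d^6*y^2 + 1106*d^5*y^3 + 4193*d^4*y^4 + 9447*d^3*y^5 + 12600*d^2*y^6 + 9162*d*y^7 + 2780*y^8))"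
    unfolding Gcomb_def c1_def c2_def DB_def NB_def mB1_def mB2_def mB3_def mB4_def xd by algebra
  have p0: "0 \<le> (6*d^6*y + 83*d^5*y^2 + 468*d^4*y^3 + 1371*d^3*y^4 + 2185*d^2*y^5 + 1774*d*y^6 + 560*y^7)"
    using x y d by (intro add_nonneg_nonneg mult_nonneg_nonneg zero_le_power; simp)
  have p1: "0 \<le> (10*d^7*y + 161*d^6*y^2 + 1106*d^5*y^3 + 4193*d^4*y^4 + 9447*d^3*y^5 + 12600*d^2*y^6 + 9162*d*y^7 + 2780*y^8)"
    using x y d by (intro add_nonneg_nonneg mult_nonneg_nonneg zero_le_power; simp)
  have "0 \<le> al * (6*d^6*y + 83*d^5*y^2 + 468*d^4*y^3 + 1371*d^3*y^4 + 2185*d^2*y^5 + 1774*d*y^6 + 560*y^7)" using al p0 by (rule mult_nonneg_nonneg)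
  moreover have "0 \<le> be * (10*d^7*y + 161*d^6*y^2 + 1106*d^5*y^3 + 4193*d^4*y^4 + 9447*d^3*y^5 + 12600*d^2*y^6 + 9162*d*y^7 + 2780*y^8)" using be p1 by (rule mult_nonneg_nonneg)
  ultimately show ?thesis unfolding e by linarith
qed

lemma ptB_1100:
  assumes d: "0 \<le> d" and y: "0 \<le> y" and al: "0 \<le> al" and be: "0 \<le> be" and xd: "x = 2*y + d" and q: "0 \<le> (x^3 - x^2*y - 2*x*y^2 - y^3)"
  shows "Gcomb x y (DB x y) (NB x y) (mB1 x y) (mB2 x y) (mB3 x y) (mB4 x y) 1 1 0 0 al be \<le> 0"
proof -
  have x: "0 \<le> x" using xd d y by simp
  have e: "Gcomb x y (DB x y) (NB x y) (mB1 x y) (mB2 x y) (mB3 x y) (mB4 x y) 1 1 0 0 al be = -(al * (2*d^6*y + 27*d^5*y^2 + 161*d^4*y^3 + 541*d^3*y^4 + 1068*d^2*y^5 + 1157*d*y^6 + 530*y^7) + be * (2*d^7*y + 33*d^6*y^2 + 242*d^5*y^3 + 1024*d^4*y^4 + 2691*d^3*y^5 + 4361*d^2*y^6 + 4001*d*y^7 + 1590*y^8))"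
    unfolding Gcomb_def c1_def c2_def DB_def NB_def mB1_def mB2_def mB3_def mB4_def xd by algebra
  have p0: "0 \<le> (2*d^6*y + 27*d^5*y^2 + 161*d^4*y^3 + 541*d^3*y^4 + 1068*d^2*y^5 + 1157*d*y^6 + 530*y^7)"
    using x y d by (intro add_nonneg_nonneg mult_nonneg_nonneg zero_le_power; simp)
  have p1: "0 \<le> (2*d^7*y + 33*d^6*y^2 + 242*d^5*y^3 + 1024*d^4*y^4 + 2691*d^3*y^5 + 4361*d^2*y^6 + 4001*d*y^7 + 1590*y^8)"
    using x y d by (intro add_nonneg_nonneg mult_nonneg_nonneg zero_le_power; simp)
  have "0 \<le> al * (2*d^6*y + 27*d^5*y^2 + 161*d^4*y^3 + 541*d^3*y^4 + 1068*d^2*y^5 + 1157*d*y^6 + 530*y^7)" using al p0 by (rule mult_nonneg_nonneg)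
  moreover have "0 \<le> be * (2*d^7*y + 33*d^6*y^2 + 242*d^5*y^3 + 1024*d^4*y^4 + 2691*d^3*y^5 + 4361*d^2*y^6 + 4001*d*y^7 + 1590*y^8)" using be p1 by (rule mult_nonneg_nonneg)
  ultimately show ?thesis unfolding e by linarith
qed

lemma ptB_1101:
  assumes d: "0 \<le> d" and y: "0 \<le> y" and al: "0 \<le> al" and be: "0 \<le> be" and xd: "x = 2*y + d" and q: "0 \<le> (x^3 - x^2*y - 2*x*y^2 - y^3)"
  shows "Gcomb x y (DB x y) (NB x y) (mB1 x y) (mB2 x y) (mB3 x y) (mB4 x y) 1 1 0 1 al be \<le> 0"
proof -
  have x: "0 \<le> x" using xd d y by simp
  have e: "Gcomb x y (DB x y) (NB x y) (mB1 x y) (mB2 x y) (mB3 x y) (mB4 x y) 1 1 0 1 al be = -(al * (4*d^6*y + 58*d^5*y^2 + 352*d^4*y^3 + 1144*d^3*y^4 + 2098*d^2*y^5 + 2056*d*y^6 + 840*y^7) + be * (4*d^6*y^2 + 58*d^5*y^3 + 352*d^4*y^4 + 1144*d^3*y^5 + 2098*d^2*y^6 + 2056*d*y^7 + 840*y^8))"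
    unfolding Gcomb_def c1_def c2_def DB_def NB_def mB1_def mB2_def mB3_def mB4_def xd by algebra
  have p0: "0 \<le> (4*d^6*y + 58*d^5*y^2 + 352*d^4*y^3 + 1144*d^3*y^4 + 2098*d^2*y^5 + 2056*d*y^6 + 840*y^7)"
    using x y d by (intro add_nonneg_nonneg mult_nonneg_nonneg zero_le_power; simp)
  have p1: "0 \<le> (4*d^6*y^2 + 58*d^5*y^3 + 352*d^4*y^4 + 1144*d^3*y^5 + 2098*d^2*y^6 + 2056*d*y^7 + 840*y^8)"
    using x y d by (intro add_nonneg_nonneg mult_nonneg_nonneg zero_le_power; simp)
  have "0 \<le> al * (4*d^6*y + 58*d^5*y^2 + 352*d^4*y^3 + 1144*d^3*y^4 + 2098*d^2*y^5 + 2056*d*y^6 + 840*y^7)" using al p0 by (rule mult_nonneg_nonneg)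
  moreover have "0 \<le> be * (4*d^6*y^2 + 58*d^5*y^3 + 352*d^4*y^4 + 1144*d^3*y^5 + 2098*d^2*y^6 + 2056*d*y^7 + 840*y^8)" using be p1 by (rule mult_nonneg_nonneg)
  ultimately show ?thesis unfolding e by linarith
qed

lemma ptB_1110:
  assumes d: "0 \<le> d" and y: "0 \<le> y" and al: "0 \<le> al" and be: "0 \<le> be" and xd: "x = 2*y + d" and q: "0 \<le> (x^3 - x^2*y - 2*x*y^2 - y^3)"
  shows "Gcomb x y (DB x y) (NB x y) (mB1 x y) (mB2 x y) (mB3 x y) (mB4 x y) 1 1 1 0 al be \<le> 0"
proof -
  have x: "0 \<le> x" using xd d y by simp
  have e: "Gcomb x y (DB x y) (NB x y) (mB1 x y) (mB2 x y) (mB3 x y) (mB4 x y) 1 1 1 0 al be = -(al * (4*d^6*y + 54*d^5*y^2 + 306*d^4*y^3 + 930*d^3*y^4 + 1596*d^2*y^5 + 1464*d*y^6 + 560*y^7) + be * 0)"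
    unfolding Gcomb_def c1_def c2_def DB_def NB_def mB1_def mB2_def mB3_def mB4_def xd by algebra
  have p0: "0 \<le> (4*d^6*y + 54*d^5*y^2 + 306*d^4*y^3 + 930*d^3*y^4 + 1596*d^2*y^5 + 1464*d*y^6 + 560*y^7)"
    using x y d by (intro add_nonneg_nonneg mult_nonneg_nonneg zero_le_power; simp)
  have p1: "0 \<le> (0::real)"
    by simp
  have "0 \<le> al * (4*d^6*y + 54*d^5*y^2 + 306*d^4*y^3 + 930*d^3*y^4 + 1596*d^2*y^5 + 1464*d*y^6 + 560*y^7)" using al p0 by (rule mult_nonneg_nonneg)
  moreover have "0 \<le> be * (0::real)" using be p1 by (rule mult_nonneg_nonneg)
  ultimately show ?thesis unfolding e by linarith
qed

lemma ptB_1111: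
  assumes d: "0 \<le> d" and y: "0 \<le> y" and al: "0 \<le> al" and be: "0 \<le> be" and xd: "x = 2*y + d" and q: "0 \<le> (x^3 - x^2*y - 2*x*y^2 - y^3)"
  shows "Gcomb x y (DB x y) (NB x y) (mB1 x y) (mB2 x y) (mB3 x y) (mB4 x y) 1 1 1 1 al be \<le> 0"
proof -
  have x: "0 \<le> x" using xd d y by simp
  have e: "Gcomb x y (DB x y) (NB x y) (mB1 x y) (mB2 x y) (mB3 x y) (mB4 x y) 1 1 1 1 al be = -(al * (6*d^6*y + 85*d^5*y^2 + 497*d^4*y^3 + 1533*d^3*y^4 + 2626*d^2*y^5 + 2363*d*y^6 + 870*y^7) + be * (6*d^7*y + 103*d^6*y^2 + 752*d^5*y^3 + 3024*d^4*y^4 + 7225*d^3*y^5 + 10241*d^2*y^6 + 7959*d*y^7 + 2610*y^8))"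
    unfolding Gcomb_def c1_def c2_def DB_def NB_def mB1_def mB2_def mB3_def mB4_def xd by algebra
  have p0: "0 \<le> (6*d^6*y + 85*d^5*y^2 + 497*d^4*y^3 + 1533*d^3*y^4 + 2626*d^2*y^5 + 2363*d*y^6 + 870*y^7)"
    using x y d by (intro add_nonneg_nonneg mult_nonneg_nonneg zero_le_power; simp)
  have p1: "0 \<le> (6*d^7*y + 103*d^6*y^2 + 752*d^5*y^3 + 3024*d^4*y^4 + 7225*d^3*y^5 + 10241*d^2*y^6 + 7959*d*y^7 + 2610*y^8)"
    using x y d by (intro add_nonneg_nonneg mult_nonneg_nonneg zero_le_power; simp)
  have "0 \<le> al * (6*d^6*y + 85*d^5*y^2 + 497*d^4*y^3 + 1533*d^3*y^4 + 2626*d^2*y^5 + 2363*d*y^6 + 870*y^7)" using al p0 by (rule mult_nonneg_nonneg)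
  moreover have "0 \<le> be * (6*d^7*y + 103*d^6*y^2 + 752*d^5*y^3 + 3024*d^4*y^4 + 7225*d^3*y^5 + 10241*d^2*y^6 + 7959*d*y^7 + 2610*y^8)" using be p1 by (rule mult_nonneg_nonneg)
  ultimately show ?thesis unfolding e by linarith
qed

lemma ptA:
  assumes h: "y \<le> x" "0 \<le> y" "(x^3 - x^2*y - 2*x*y^2 - y^3) \<le> 0" and bits: "a1 = 0 \<or> a1 = 1" "a2 = 0 \<or> a2 = 1" "b1 = 0 \<or> b1 = 1" "b2 = 0 \<or> b2 = 1" and ab: "0 \<le> al" "0 \<le> be"
  shows "Gcomb x y (DA x y) (NA x y) (mA1 x y) (mA2 x y) (mA3 x y) (mA4 x y) a1 a2 b1 b2 al be \<le> 0"
proof -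
  define d where "d = x - y"
  have d: "0 \<le> d" "x = y + d" using h(1) by (auto simp: d_def)
  note L = ptA_0000[OF d(1) h(2) ab(1) ab(2) d(2) h(3)] ptA_0001[OF d(1) h(2) ab(1) ab(2) d(2) h(3)] ptA_0010[OF d(1) h(2) ab(1) ab(2) d(2) h(3)] ptA_0011[OF d(1) h(2) ab(1) ab(2) d(2) h(3)] ptA_0100[OF d(1) h(2) ab(1) ab(2) d(2) h(3)] ptA_0101[OF d(1) h(2) ab(1) ab(2) d(2) h(3)] ptA_0110[OF d(1) h(2) ab(1) ab(2) d(2) h(3)] ptA_0111[OF d(1) h(2) ab(1) ab(2) d(2) h(3)] ptA_1000[OF d(1) h(2) ab(1) ab(2) d(2) h(3)] ptA_1001[OF d(1) h(2) ab(1) ab(2) d(2) h(3)] ptA_1010[OF d(1) h(2) ab(1) ab(2) d(2) h(3)] ptA_1011[OF d(1) h(2) ab(1) ab(2) d(2) h(3)] ptA_1100[OF d(1) h(2) ab(1) ab(2) d(2) h(3)] ptA_1101[OF d(1) h(2) ab(1) ab(2) d(2) h(3)] ptA_1110[OF d(1) h(2) ab(1) ab(2) d(2) h(3)] ptA_1111[OF d(1) h(2) ab(1) ab(2) d(2) h(3)]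
  show ?thesis using bits L by auto
qed

lemma ptB:
  assumes h: "2*y \<le> x" "0 \<le> y" "0 \<le> (x^3 - x^2*y - 2*x*y^2 - y^3)" and bits: "a1 = 0 \<or> a1 = 1" "a2 = 0 \<or> a2 = 1" "b1 = 0 \<or> b1 = 1" "b2 = 0 \<or> b2 = 1" and ab: "0 \<le> al" "0 \<le> be"
  shows "Gcomb x y (DB x y) (NB x y) (mB1 x y) (mB2 x y) (mB3 x y) (mB4 x y) a1 a2 b1 b2 al be \<le> 0"
proof -
  define d where "d = x - 2*y"
  have d: "0 \<le> d" "x = 2*y + d" using h(1) by (auto simp: d_def)
  note L = ptB_0000[OF d(1) h(2) ab(1) ab(2) d(2) h(3)] ptB_0001[OF d(1) h(2) ab(1) ab(2) d(2) h(3)] ptB_0010[OF d(1) h(2) ab(1) ab(2) d(2) h(3)] ptB_0011[OF d(1) h(2) ab(1) ab(2) d(2) h(3)] ptB_0100[OF d(1) h(2) ab(1) ab(2) d(2) h(3)] ptB_0101[OF d(1) h(2) ab(1) ab(2) d(2) h(3)] ptB_0110[OF d(1) h(2) ab(1) ab(2) d(2) h(3)] ptB_0111[OF d(1) h(2) ab(1) ab(2) d(2) h(3)] ptB_1000[OF d(1) h(2) ab(1) ab(2) d(2) h(3)] ptB_1001[OF d(1) h(2) ab(1) ab(2) d(2) h(3)] ptB_1010[OF d(1) h(2) ab(1) ab(2) d(2) h(3)] ptB_1011[OF d(1) h(2) ab(1) ab(2) d(2) h(3)] ptB_1100[OF d(1) h(2) ab(1) ab(2) d(2) h(3)] ptB_1101[OF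 d(1) h(2) ab(1) ab(2) d(2) h(3)] ptB_1110[OF d(1) h(2) ab(1) ab(2) d(2) h(3)] ptB_1111[OF d(1) h(2) ab(1) ab(2) d(2) h(3)]
  show ?thesis using bits L by auto
qed

lemma mA1_nonneg: assumes "y \<le> x" "0 \<le> y" shows "0 \<le> mA1 x y"
proof -
  define d where "d = x - y"
  have d: "0 \<le> d" "x = y + d" using assms(1) by (auto simp: d_def)
  have "mA1 x y = (2*d^4 + 12*d^3*y + 27*d^2*y^2 + 26*d*y^3 + 9*y^4)" unfolding mA1_def d(2) by algebra
  moreover have "0 \<le> (2*d^4 + 12*d^3*y + 27*d^2*y^2 + 26*d*y^3 + 9*y^4)" using d assms(2) by (intro add_nonneg_nonneg mult_nonneg_nonneg zero_le_power; simp)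
  ultimately show ?thesis by simp
qed

lemma mA2_nonneg: assumes "y \<le> x" "0 \<le> y" shows "0 \<le> mA2 x y"
proof -
  define d where "d = x - y"
  have d: "0 \<le> d" "x = y + d" using assms(1) by (auto simp: d_def)
  have "mA2 x y = (3*d^2*y^2 + 10*d*y^3 + 9*y^4)" unfolding mA2_def d(2) by algebra
  moreover have "0 \<le> (3*d^2*y^2 + 10*d*y^3 + 9*y^4)" using d assms(2) by (intro add_nonneg_nonneg mult_nonneg_nonneg zero_le_power; simp)
  ultimately show ?thesis by simp
qed

lemma mA3_nonneg: assumes "y \<le> x" "0 \<le> y" shows "0 \<le> mA3 x y"
proof -
  define d where "d = x - y"
  have d: "0 \<le> d" "x = y + d" using assms(1) by (auto simp: d_def)
  have "mA3 x y = (3*d^4 + 16*d^3*y + 32*d^2*y^2 + 28*d*y^3 + 9*y^4)" unfolding mA3_def d(2) by algebra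
  moreover have "0 \<le> (3*d^4 + 16*d^3*y + 32*d^2*y^2 + 28*d*y^3 + 9*y^4)" using d assms(2) by (intro add_nonneg_nonneg mult_nonneg_nonneg zero_le_power; simp)
  ultimately show ?thesis by simp
qed

lemma mA4_nonneg: assumes "y \<le> x" "0 \<le> y" shows "0 \<le> mA4 x y"
proof -
  define d where "d = x - y"
  have d: "0 \<le> d" "x = y + d" using assms(1) by (auto simp: d_def)
  have "mA4 x y = (d^4 + 4*d^3*y + 8*d^2*y^2 + 12*d*y^3 + 9*y^4)" unfolding mA4_def d(2) by algebra
  moreover have "0 \<le> (d^4 + 4*d^3*y + 8*d^2*y^2 + 12*d*y^3 + 9*y^4)" using d assms(2) by (intro add_nonneg_nonneg mult_nonneg_nonneg zero_le_power; simp)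
  ultimately show ?thesis by simp
qed

lemma DA_pos: assumes "0 < x" "0 \<le> y" shows "0 < DA x y"
proof -
  have "DA x y = 2*x^4 + (3*x^3*y + 4*x^2*y^2 + 4*x*y^3 + 2*y^4)" unfolding DA_def by algebra
  moreover have "0 \<le> (3*x^3*y + 4*x^2*y^2 + 4*x*y^3 + 2*y^4)" using assms by (intro add_nonneg_nonneg mult_nonneg_nonneg zero_le_power; simp)
  moreover have "0 < 2*x^4" using assms by simp
  ultimately show ?thesis by linarith
qed

lemma mB1_nonneg: assumes "2*y \<le> x" "0 \<le> y" shows "0 \<le> mB1 x y"
proof -
  define d where "d = x - 2*y"
  have d: "0 \<le> d" "x = 2*y + d" using assms(1) by (auto simp: d_def)
  have "mB1 x y = (4*d^6 + 54*d^5*y + 304*d^4*y^2 + 913*d^3*y^3 + 1540*d^2*y^4 + 1377*d*y^5 + 505*y^6)" unfolding mB1_def d(2) by algebra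
  moreover have "0 \<le> (4*d^6 + 54*d^5*y + 304*d^4*y^2 + 913*d^3*y^3 + 1540*d^2*y^4 + 1377*d*y^5 + 505*y^6)" using d assms(2) by (intro add_nonneg_nonneg mult_nonneg_nonneg zero_le_power; simp)
  ultimately show ?thesis by simp
qed

lemma mB2_nonneg: assumes "2*y \<le> x" "0 \<le> y" shows "0 \<le> mB2 x y"
proof -
  define d where "d = x - 2*y"
  have d: "0 \<le> d" "x = 2*y + d" using assms(1) by (auto simp: d_def)
  have "mB2 x y = (2*d^4*y^2 + 25*d^3*y^3 + 112*d^2*y^4 + 217*d*y^5 + 155*y^6)" unfolding mB2_def d(2) by algebra
  moreover have "0 \<le> (2*d^4*y^2 + 25*d^3*y^3 + 112*d^2*y^4 + 217*d*y^5 + 155*y^6)" using d assms(2) by (intro add_nonneg_nonneg mult_nonneg_nonneg zero_le_power; simp)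
  ultimately show ?thesis by simp
qed

lemma mB3_nonneg: assumes "2*y \<le> x" "0 \<le> y" shows "0 \<le> mB3 x y"
proof -
  define d where "d = x - 2*y"
  have d: "0 \<le> d" "x = 2*y + d" using assms(1) by (auto simp: d_def)
  have "mB3 x y = (2*d^6 + 29*d^5*y + 182*d^4*y^2 + 631*d^3*y^3 + 1267*d^2*y^4 + 1386*d*y^5 + 640*y^6)" unfolding mB3_def d(2) by algebra
  moreover have "0 \<le> (2*d^6 + 29*d^5*y + 182*d^4*y^2 + 631*d^3*y^3 + 1267*d^2*y^4 + 1386*d*y^5 + 640*y^6)" using d assms(2) by (intro add_nonneg_nonneg mult_nonneg_nonneg zero_le_power; simp)
  ultimately show ?thesis by simp
qed

lemma mB4_nonneg: assumes "2*y \<le> x" "0 \<le> y" shows "0 \<le> mB4 x y"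
proof -
  define d where "d = x - 2*y"
  have d: "0 \<le> d" "x = 2*y + d" using assms(1) by (auto simp: d_def)
  have "mB4 x y = (2*d^6 + 25*d^5*y + 132*d^4*y^2 + 379*d^3*y^3 + 627*d^2*y^4 + 568*d*y^5 + 220*y^6)" unfolding mB4_def d(2) by algebra
  moreover have "0 \<le> (2*d^6 + 25*d^5*y + 132*d^4*y^2 + 379*d^3*y^3 + 627*d^2*y^4 + 568*d*y^5 + 220*y^6)" using d assms(2) by (intro add_nonneg_nonneg mult_nonneg_nonneg zero_le_power; simp)
  ultimately show ?thesis by simp
qed

lemma DB_pos: assumes "0 < x" "0 \<le> y" shows "0 < DB x y"
proof -
  have "DB x y = 4*x^6 + (4*x^5*y + 5*x^4*y^2 + 8*x^3*y^3 + 5*x^2*y^4 + x*y^5)" unfolding DB_def by algebra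
  moreover have "0 \<le> (4*x^5*y + 5*x^4*y^2 + 8*x^3*y^3 + 5*x^2*y^4 + x*y^5)" using assms by (intro add_nonneg_nonneg mult_nonneg_nonneg zero_le_power; simp)
  moreover have "0 < 4*x^6" using assms by simp
  ultimately show ?thesis by linarith
qed

lemma ind01: "ind X r = 0 \<or> ind X r = 1" by (simp add: ind_def)

lemma upper_instance:
  assumes sym: "sym_game R \<alpha> \<beta> Acts" and NE: "is_NE x y \<alpha> \<beta> Acts A"
    and opt: "opt_cost x y \<alpha> \<beta> Acts > 0"
    and pt: "\<And>a1 a2 b1 b2 al be. a1 = 0 \<or> a1 = 1 \<Longrightarrow> a2 = 0 \<or> a2 = 1 \<Longrightarrow> b1 = 0 \<or> b1 = 1 \<Longrightarrow> b2 = 0 \<or> b2 = 1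
        \<Longrightarrow> 0 \<le> al \<Longrightarrow> 0 \<le> be \<Longrightarrow> Gcomb x y D N m1 m2 m3 m4 a1 a2 b1 b2 al be \<le> 0"
    and m: "0 \<le> m1" "0 \<le> m2" "0 \<le> m3" "0 \<le> m4" and Dpos: "0 < D"
  shows "social_cost x y \<alpha> \<beta> A / opt_cost x y \<alpha> \<beta> Acts \<le> N / D"
proof -
  have fin: "finite R" "finite Acts" "Acts \<noteq> {}" "\<forall>a\<in>Acts. a \<subseteq> R" "\<forall>r\<in>R. \<alpha> r \<ge> 0 \<and> \<beta> r \<ge> 0"
    using sym by (auto simp: sym_game_def)
  have "opt_cost x y \<alpha> \<beta> Acts \<in> social_cost x y \<alpha> \<beta> ` (Acts \<times> Acts)"
    unfolding opt_cost_def using fin by (intro Min_in) auto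
  then obtain B1 B2 where B: "B1 \<in> Acts" "B2 \<in> Acts" and optB: "opt_cost x y \<alpha> \<beta> Acts = social_cost x y \<alpha> \<beta> (B1,B2)"
    by auto
  obtain A1 A2 where A: "A = (A1,A2)" by (cases A)
  have Ain: "A1 \<in> Acts" "A2 \<in> Acts" using NE A by (auto simp: is_NE_def)
  have ne: "cost1 x y \<alpha> \<beta> (A1,A2) \<le> cost1 x y \<alpha> \<beta> (B1,A2)" "cost1 x y \<alpha> \<beta> (A1,A2) \<le> cost1 x y \<alpha> \<beta> (B2,A2)"
     "cost2 x y \<alpha> \<beta> (A1,A2) \<le> cost2 x y \<alpha> \<beta> (A1,B1)" "cost2 x y \<alpha> \<beta> (A1,A2) \<le> cost2 x y \<alpha> \<beta> (A1,B2)"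
    using NE B unfolding A is_NE_def by auto
  have "D * social_cost x y \<alpha> \<beta> (A1,A2) \<le> N * social_cost x y \<alpha> \<beta> (B1,B2)"
  proof (rule comb_bound[OF fin(1) _ _ _ _ m ne])
    show "A1 \<subseteq> R" "A2 \<subseteq> R" "B1 \<subseteq> R" "B2 \<subseteq> R" using fin(4) Ain B by auto
    fix r assume "r \<in> R"
    then show "Gcomb x y D N m1 m2 m3 m4 (ind A1 r) (ind A2 r) (ind B1 r) (ind B2 r) (\<alpha> r) (\<beta> r) \<le> 0"
      using fin(5) by (intro pt ind01) auto
  qed
  then have "D * social_cost x y \<alpha> \<beta> A \<le> N * opt_cost x y \<alpha> \<beta> Acts" using A optB by simp
  then have "social_cost x y \<alpha> \<beta> A * D \<le> N * opt_cost x y \<alpha> \<beta> Acts" by (simp add: mult.commute)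
  then show ?thesis using opt Dpos by (simp add: frac_le_eq divide_le_eq le_divide_eq field_simps)
qed

lemma class_sym: "G \<in> {sym_congestion_games, sym_network_games} \<Longrightarrow> (\<alpha>, \<beta>, Acts) \<in> G \<Longrightarrow> \<exists>R. sym_game R \<alpha> \<beta> Acts"
  by (auto simp: sym_congestion_games_def sym_network_games_def)

lemma upper_class:
  assumes G: "G \<in> {sym_congestion_games, sym_network_games}"
    and pt: "\<And>a1 a2 b1 b2 al be. a1 = 0 \<or> a1 = 1 \<Longrightarrow> a2 = 0 \<or> a2 = 1 \<Longrightarrow> b1 = 0 \<or> b1 = 1 \<Longrightarrow> b2 = 0 \<or> b2 = 1
        \<Longrightarrow> 0 \<le> al \<Longrightarrow> 0 \<le> be \<Longrightarrow> Gcomb x y D N m1 m2 m3 m4 a1 a2 b1 b2 al be \<le> 0"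
    and m: "0 \<le> m1" "0 \<le> m2" "0 \<le> m3" "0 \<le> m4" and Dpos: "0 < D"
  shows "poa_class x y G \<le> ereal (N / D)"
  unfolding poa_class_def
proof (rule Sup_least)
  fix v assume "v \<in> {poa_instance x y \<alpha> \<beta> Acts | \<alpha> \<beta> Acts. (\<alpha>, \<beta>, Acts) \<in> G \<and> opt_cost x y \<alpha> \<beta> Acts > 0}"
  then obtain \<alpha> \<beta> Acts where v: "v = poa_instance x y \<alpha> \<beta> Acts" and inG: "(\<alpha>, \<beta>, Acts) \<in> G"
    and opt: "opt_cost x y \<alpha> \<beta> Acts > 0" by blast
  obtain R where sym: "sym_game R \<alpha> \<beta> Acts" using class_sym[OF G inG] by blast
  show "v \<le> ereal (N / D)"
    unfolding v poa_instance_def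
  proof (rule Sup_least)
    fix u assume "u \<in> {ereal (social_cost x y \<alpha> \<beta> A / opt_cost x y \<alpha> \<beta> Acts) | A. is_NE x y \<alpha> \<beta> Acts A}"
    then obtain A where u: "u = ereal (social_cost x y \<alpha> \<beta> A / opt_cost x y \<alpha> \<beta> Acts)" and NE: "is_NE x y \<alpha> \<beta> Acts A"
      by blast
    show "u \<le> ereal (N / D)" unfolding u using upper_instance[OF sym NE opt pt m Dpos] by simp
  qed
qed

definition tl8 :: "nat \<Rightarrow> nat" where
  "tl8 e = (if e = 0 then 0 else if e = 1 then 0 else if e = 2 then 1 else if e = 3 then 2
            else if e = 4 then 3 else if e = 5 then 3 else if e = 6 then 1 else 4)"
definition hd8 :: "nat \<Rightarrow> nat" where
  "hd8 e = (if e = 0 then 1 else if e = 1 then 2 else if e = 2 then 2 else if e = 3 then 3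
            else if e = 4 then 5 else if e = 5 then 4 else if e = 6 then 4 else 5)"
definition E8 :: "nat set" where "E8 = {0,1,2,3,4,5,6,7}"

lemma w5: assumes "set p \<subseteq> E8" "walk tl8 hd8 5 5 p" shows "p = []"
proof (cases p)
  case Nil then show ?thesis using assms by simp
next
  case (Cons e es)
  have e: "e \<in> E8" "tl8 e = 5" "walk tl8 hd8 (hd8 e) 5 es" "set es \<subseteq> E8" using assms Cons by auto
  then show ?thesis by (auto simp: E8_def tl8_def)
qed

lemma w4: assumes "set p \<subseteq> E8" "walk tl8 hd8 4 5 p" shows "p = [7]"
proof (cases p)
  case Nil then show ?thesis using assms by simp
next
  case (Cons e es)
  have e: "e \<in> E8" "tl8 e = 4" "walk tl8 hd8 (hd8 e) 5 es" "set es \<subseteq> E8" using assms Cons by auto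
  then have ea: "e = 7" by (auto simp: E8_def tl8_def)
  then have "walk tl8 hd8 5 5 es" using e(3) by (simp add: hd8_def)
  then show ?thesis using w5[OF e(4)] Cons ea by auto
qed

lemma w3: assumes "set p \<subseteq> E8" "walk tl8 hd8 3 5 p" shows "p = [4] \<or> p = [5,7]"
proof (cases p)
  case Nil then show ?thesis using assms by simp
next
  case (Cons e es)
  have e: "e \<in> E8" "tl8 e = 3" "walk tl8 hd8 (hd8 e) 5 es" "set es \<subseteq> E8" using assms Cons by auto
  then have "e = 4 \<or> e = 5" by (auto simp: E8_def tl8_def)
  then show ?thesis
  proof (elim disjE)
    assume ea: "e = 4"
    then have "walk tl8 hd8 5 5 es" using e(3) by (simp add: hd8_def)
    then show ?thesis using w5[OF e(4)] Cons ea by auto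
  next
    assume ea: "e = 5"
    then have "walk tl8 hd8 4 5 es" using e(3) by (simp add: hd8_def)
    then show ?thesis using w4[OF e(4)] Cons ea by auto
  qed
qed

lemma w2: assumes "set p \<subseteq> E8" "walk tl8 hd8 2 5 p" shows "p = [3,4] \<or> p = [3,5,7]"
proof (cases p)
  case Nil then show ?thesis using assms by simp
next
  case (Cons e es)
  have e: "e \<in> E8" "tl8 e = 2" "walk tl8 hd8 (hd8 e) 5 es" "set es \<subseteq> E8" using assms Cons by auto
  then have ea: "e = 3" by (auto simp: E8_def tl8_def)
  then have "walk tl8 hd8 3 5 es" using e(3) by (simp add: hd8_def)
  then show ?thesis using w3[OF e(4)] Cons ea by auto
qed

lemma w1: assumes "set p \<subseteq> E8" "walk tl8 hd8 1 5 p" shows "p = [2,3,4] \<or> p = [2,3,5,7] \<or> p = [6,7]"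
proof (cases p)
  case Nil then show ?thesis using assms by simp
next
  case (Cons e es)
  have e: "e \<in> E8" "tl8 e = 1" "walk tl8 hd8 (hd8 e) 5 es" "set es \<subseteq> E8" using assms Cons by auto
  then have "e = 2 \<or> e = 6" by (auto simp: E8_def tl8_def)
  then show ?thesis
  proof (elim disjE)
    assume ea: "e = 2"
    then have "walk tl8 hd8 2 5 es" using e(3) by (simp add: hd8_def)
    then show ?thesis using w2[OF e(4)] Cons ea by auto
  next
    assume ea: "e = 6"
    then have "walk tl8 hd8 4 5 es" using e(3) by (simp add: hd8_def)
    then show ?thesis using w4[OF e(4)] Cons ea by auto
  qed
qed

lemma w0: assumes "set p \<subseteq> E8" "walk tl8 hd8 0 5 p" shows "p = [0,2,3,4] \<or> p = [0,2,3,5,7] \<or> p = [0,6,7] \<or> p = [1,3,4] \<or> p = [1,3,5,7]"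
proof (cases p)
  case Nil then show ?thesis using assms by simp
next
  case (Cons e es)
  have e: "e \<in> E8" "tl8 e = 0" "walk tl8 hd8 (hd8 e) 5 es" "set es \<subseteq> E8" using assms Cons by auto
  then have "e = 0 \<or> e = 1" by (auto simp: E8_def tl8_def)
  then show ?thesis
  proof (elim disjE)
    assume ea: "e = 0"
    then have "walk tl8 hd8 1 5 es" using e(3) by (simp add: hd8_def)
    then show ?thesis using w1[OF e(4)] Cons ea by auto
  next
    assume ea: "e = 1"
    then have "walk tl8 hd8 2 5 es" using e(3) by (simp add: hd8_def)
    then show ?thesis using w2[OF e(4)] Cons ea by auto
  qed
qed

definition Acts8 :: "nat set set" where
  "Acts8 = {{0,2,3,4}, {0,2,3,5,7}, {0,6,7}, {1,3,4}, {1,3,5,7}}"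

lemma path_i: "is_path E8 tl8 hd8 0 5 p \<Longrightarrow> set p \<in> Acts8"
proof -
  assume h: "is_path E8 tl8 hd8 0 5 p"
  then have "set p \<subseteq> E8" "walk tl8 hd8 0 5 p" by (auto simp: is_path_def)
  then have "p = [0,2,3,4] \<or> p = [0,2,3,5,7] \<or> p = [0,6,7] \<or> p = [1,3,4] \<or> p = [1,3,5,7]" by (rule w0)
  then show ?thesis unfolding Acts8_def by (elim disjE) simp_all
qed

lemma ispath: "is_path E8 tl8 hd8 0 5 [0,2,3,4]" "is_path E8 tl8 hd8 0 5 [0,2,3,5,7]" "is_path E8 tl8 hd8 0 5 [0,6,7]"
   "is_path E8 tl8 hd8 0 5 [1,3,4]" "is_path E8 tl8 hd8 0 5 [1,3,5,7]"
  by (simp_all add: is_path_def E8_def tl8_def hd8_def)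

lemma Acts8_paths: "Acts8 = {set p | p. is_path E8 tl8 hd8 0 5 p}"
proof (intro equalityI subsetI)
  fix a assume "a \<in> {set p | p. is_path E8 tl8 hd8 0 5 p}"
  then show "a \<in> Acts8" using path_i by blast
next
  fix a assume "a \<in> Acts8"
  then have "a = set [0,2,3,4] \<or> a = set [0,2,3,5,7] \<or> a = set [0,6,7] \<or> a = set [1,3,4] \<or> a = set [1,3,5,7]"
    unfolding Acts8_def by simp
  then show "a \<in> {set p | p. is_path E8 tl8 hd8 0 5 p}"
    using ispath by blast
qed

lemma in_net:
  assumes "\<forall>r\<in>E8. \<alpha> r \<ge> 0 \<and> \<beta> r \<ge> 0"
  shows "(\<alpha>, \<beta>, Acts8) \<in> sym_network_games" "(\<alpha>, \<beta>, Acts8) \<in> sym_congestion_games"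
proof -
  have s: "sym_game E8 \<alpha> \<beta> Acts8" using assms unfolding sym_game_def E8_def Acts8_def by auto
  show "(\<alpha>, \<beta>, Acts8) \<in> sym_network_games" unfolding sym_network_games_def
    using s Acts8_paths by blast
  show "(\<alpha>, \<beta>, Acts8) \<in> sym_congestion_games" unfolding sym_congestion_games_def
    using s by blast
qed

definition bA :: "real \<Rightarrow> real \<Rightarrow> nat \<Rightarrow> real" where "bA x y r = (if r = 0 then (x+y)^2 else if r = 1 then x*(x+y) else if r = 3 then x^2+x*y+y^2 else if r = 4 then y*(x+y) else if r = 7 then (x+y)^2 else 0)"
definition bB :: "real \<Rightarrow> real \<Rightarrow> nat \<Rightarrow> real" where "bB x y r = (if r = 0 then (x+y)^2*(x-y) else if r = 1 then x*(x^2-y^2) else if r = 3 then x*(x^2+x*y+y^2) else if r = 6 then (x+y)*(x^2+x*y+y^2) else 0)"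
definition z0 :: "nat \<Rightarrow> real" where "z0 r = 0"

lemma A_c1_0: "cost1 x y z0 (bA x y) ({0,2,3,4},{1,3,5,7}) = (2*x^4 + 5*x^3*y + 4*x^2*y^2 + x*y^3)"
  by (simp add: cost1_def load_def bA_def z0_def; algebra)

lemma A_c1_1: "cost1 x y z0 (bA x y) ({0,2,3,5,7},{1,3,5,7}) = (3*x^4 + 7*x^3*y + 6*x^2*y^2 + 2*x*y^3)"
  by (simp add: cost1_def load_def bA_def z0_def; algebra)

lemma A_c1_2: "cost1 x y z0 (bA x y) ({0,6,7},{1,3,5,7}) = (2*x^4 + 5*x^3*y + 4*x^2*y^2 + x*y^3)"
  by (simp add: cost1_def load_def bA_def z0_def; algebra)

lemma A_c1_3: "cost1 x y z0 (bA x y) ({1,3,4},{1,3,5,7}) = (2*x^4 + 5*x^3*y + 4*x^2*y^2 + x*y^3)"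
  by (simp add: cost1_def load_def bA_def z0_def; algebra)

lemma A_c1_4: "cost1 x y z0 (bA x y) ({1,3,5,7},{1,3,5,7}) = (3*x^4 + 7*x^3*y + 6*x^2*y^2 + 2*x*y^3)"
  by (simp add: cost1_def load_def bA_def z0_def; algebra)

lemma A_c2_0: "cost2 x y z0 (bA x y) ({0,2,3,4},{0,2,3,4}) = (2*x^3*y + 6*x^2*y^2 + 7*x*y^3 + 3*y^4)"
  by (simp add: cost2_def load_def bA_def z0_def; algebra)

lemma A_c2_1: "cost2 x y z0 (bA x y) ({0,2,3,4},{0,2,3,5,7}) = (2*x^3*y + 6*x^2*y^2 + 7*x*y^3 + 3*y^4)"
  by (simp add: cost2_def load_def bA_def z0_def; algebra)

lemma A_c2_2: "cost2 x y z0 (bA x y) ({0,2,3,4},{0,6,7}) = (x^3*y + 4*x^2*y^2 + 5*x*y^3 + 2*y^4)"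
  by (simp add: cost2_def load_def bA_def z0_def; algebra)

lemma A_c2_3: "cost2 x y z0 (bA x y) ({0,2,3,4},{1,3,4}) = (x^3*y + 4*x^2*y^2 + 5*x*y^3 + 2*y^4)"
  by (simp add: cost2_def load_def bA_def z0_def; algebra)

lemma A_c2_4: "cost2 x y z0 (bA x y) ({0,2,3,4},{1,3,5,7}) = (x^3*y + 4*x^2*y^2 + 5*x*y^3 + 2*y^4)"
  by (simp add: cost2_def load_def bA_def z0_def; algebra)

lemma A_cB1: "cost1 x y z0 (bA x y) ({1,3,4},{0,6,7}) = (2*x^4 + 3*x^3*y + 2*x^2*y^2)"
  by (simp add: cost1_def load_def bA_def z0_def; algebra)

lemma A_cB2: "cost2 x y z0 (bA x y) ({1,3,4},{0,6,7}) = (2*x^2*y^2 + 4*x*y^3 + 2*y^4)"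
  by (simp add: cost2_def load_def bA_def z0_def; algebra)

lemma A_NE: assumes "y \<le> x" "0 \<le> y" shows "is_NE x y z0 (bA x y) Acts8 ({0,2,3,4},{1,3,5,7})"
proof -
  define d where "d = x - y"
  have d: "0 \<le> d" "x = y + d" using assms(1) by (auto simp: d_def)
  have n1_0: "(2*x^4 + 5*x^3*y + 4*x^2*y^2 + x*y^3) \<le> (2*x^4 + 5*x^3*y + 4*x^2*y^2 + x*y^3)" by (simp add: algebra_simps)
  have "(3*x^4 + 7*x^3*y + 6*x^2*y^2 + 2*x*y^3) - (2*x^4 + 5*x^3*y + 4*x^2*y^2 + x*y^3) = (d^4 + 6*d^3*y + 14*d^2*y^2 + 15*d*y^3 + 6*y^4)" unfolding d(2) by algebra
  moreover have "0 \<le> (d^4 + 6*d^3*y + 14*d^2*y^2 + 15*d*y^3 + 6*y^4)" using d assms(2) by (intro add_nonneg_nonneg mult_nonneg_nonneg zero_le_power; simp)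
  ultimately have n1_1: "(2*x^4 + 5*x^3*y + 4*x^2*y^2 + x*y^3) \<le> (3*x^4 + 7*x^3*y + 6*x^2*y^2 + 2*x*y^3)" by linarith
  have n1_2: "(2*x^4 + 5*x^3*y + 4*x^2*y^2 + x*y^3) \<le> (2*x^4 + 5*x^3*y + 4*x^2*y^2 + x*y^3)" by (simp add: algebra_simps)
  have n1_3: "(2*x^4 + 5*x^3*y + 4*x^2*y^2 + x*y^3) \<le> (2*x^4 + 5*x^3*y + 4*x^2*y^2 + x*y^3)" by (simp add: algebra_simps)
  have "(3*x^4 + 7*x^3*y + 6*x^2*y^2 + 2*x*y^3) - (2*x^4 + 5*x^3*y + 4*x^2*y^2 + x*y^3) = (d^4 + 6*d^3*y + 14*d^2*y^2 + 15*d*y^3 + 6*y^4)" unfolding d(2) by algebra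
  moreover have "0 \<le> (d^4 + 6*d^3*y + 14*d^2*y^2 + 15*d*y^3 + 6*y^4)" using d assms(2) by (intro add_nonneg_nonneg mult_nonneg_nonneg zero_le_power; simp)
  ultimately have n1_4: "(2*x^4 + 5*x^3*y + 4*x^2*y^2 + x*y^3) \<le> (3*x^4 + 7*x^3*y + 6*x^2*y^2 + 2*x*y^3)" by linarith
  have "(2*x^3*y + 6*x^2*y^2 + 7*x*y^3 + 3*y^4) - (x^3*y + 4*x^2*y^2 + 5*x*y^3 + 2*y^4) = (d^3*y + 5*d^2*y^2 + 9*d*y^3 + 6*y^4)" unfolding d(2) by algebra
  moreover have "0 \<le> (d^3*y + 5*d^2*y^2 + 9*d*y^3 + 6*y^4)" using d assms(2) by (intro add_nonneg_nonneg mult_nonneg_nonneg zero_le_power; simp)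
  ultimately have n2_0: "(x^3*y + 4*x^2*y^2 + 5*x*y^3 + 2*y^4) \<le> (2*x^3*y + 6*x^2*y^2 + 7*x*y^3 + 3*y^4)" by linarith
  have "(2*x^3*y + 6*x^2*y^2 + 7*x*y^3 + 3*y^4) - (x^3*y + 4*x^2*y^2 + 5*x*y^3 + 2*y^4) = (d^3*y + 5*d^2*y^2 + 9*d*y^3 + 6*y^4)" unfolding d(2) by algebra
  moreover have "0 \<le> (d^3*y + 5*d^2*y^2 + 9*d*y^3 + 6*y^4)" using d assms(2) by (intro add_nonneg_nonneg mult_nonneg_nonneg zero_le_power; simp)
  ultimately have n2_1: "(x^3*y + 4*x^2*y^2 + 5*x*y^3 + 2*y^4) \<le> (2*x^3*y + 6*x^2*y^2 + 7*x*y^3 + 3*y^4)" by linarith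
  have n2_2: "(x^3*y + 4*x^2*y^2 + 5*x*y^3 + 2*y^4) \<le> (x^3*y + 4*x^2*y^2 + 5*x*y^3 + 2*y^4)" by (simp add: algebra_simps)
  have n2_3: "(x^3*y + 4*x^2*y^2 + 5*x*y^3 + 2*y^4) \<le> (x^3*y + 4*x^2*y^2 + 5*x*y^3 + 2*y^4)" by (simp add: algebra_simps)
  have n2_4: "(x^3*y + 4*x^2*y^2 + 5*x*y^3 + 2*y^4) \<le> (x^3*y + 4*x^2*y^2 + 5*x*y^3 + 2*y^4)" by (simp add: algebra_simps)
  have m: "({0,2,3,4},{1,3,5,7}) \<in> Acts8 \<times> Acts8" by (simp add: Acts8_def)
  show ?thesis unfolding is_NE_def Acts8_def ball_simps fst_conv snd_conv
    unfolding A_c1_0 A_c2_0 A_c1_1 A_c2_1 A_c1_2 A_c2_2 A_c1_3 A_c2_3 A_c1_4 A_c2_4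
    using m n1_0 n1_1 n1_2 n1_3 n1_4 n2_0 n2_1 n2_2 n2_3 n2_4 unfolding Acts8_def by blast
qed

lemma A_ratio: "DA x y * social_cost x y z0 (bA x y) ({0,2,3,4},{1,3,5,7}) = NA x y * social_cost x y z0 (bA x y) ({1,3,4},{0,6,7})"
  unfolding social_cost_def A_c1_0 A_c2_4 A_cB1 A_cB2 DA_def NA_def by algebra

lemma B_c1_0: "cost1 x y z0 (bB x y) ({0,2,3,4},{1,3,5,7}) = (2*x^5 + 3*x^4*y + x^3*y^2)"
  by (simp add: cost1_def load_def bB_def z0_def; algebra)

lemma B_c1_1: "cost1 x y z0 (bB x y) ({0,2,3,5,7},{1,3,5,7}) = (2*x^5 + 3*x^4*y + x^3*y^2)"
  by (simp add: cost1_def load_def bB_def z0_def; algebra)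

lemma B_c1_2: "cost1 x y z0 (bB x y) ({0,6,7},{1,3,5,7}) = (2*x^5 + 3*x^4*y + x^3*y^2)"
  by (simp add: cost1_def load_def bB_def z0_def; algebra)

lemma B_c1_3: "cost1 x y z0 (bB x y) ({1,3,4},{1,3,5,7}) = (2*x^5 + 3*x^4*y + x^3*y^2)"
  by (simp add: cost1_def load_def bB_def z0_def; algebra)

lemma B_c1_4: "cost1 x y z0 (bB x y) ({1,3,5,7},{1,3,5,7}) = (2*x^5 + 3*x^4*y + x^3*y^2)"
  by (simp add: cost1_def load_def bB_def z0_def; algebra)

lemma B_c2_0: "cost2 x y z0 (bB x y) ({0,2,3,4},{0,2,3,4}) = (2*x^4*y + 4*x^3*y^2 + 2*x^2*y^3 - x*y^4 - y^5)"
  by (simp add: cost2_def load_def bB_def z0_def; algebra)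

lemma B_c2_1: "cost2 x y z0 (bB x y) ({0,2,3,4},{0,2,3,5,7}) = (2*x^4*y + 4*x^3*y^2 + 2*x^2*y^3 - x*y^4 - y^5)"
  by (simp add: cost2_def load_def bB_def z0_def; algebra)

lemma B_c2_2: "cost2 x y z0 (bB x y) ({0,2,3,4},{0,6,7}) = (x^4*y + 3*x^3*y^2 + 2*x^2*y^3)"
  by (simp add: cost2_def load_def bB_def z0_def; algebra)

lemma B_c2_3: "cost2 x y z0 (bB x y) ({0,2,3,4},{1,3,4}) = (x^4*y + 3*x^3*y^2 + 2*x^2*y^3)"
  by (simp add: cost2_def load_def bB_def z0_def; algebra)

lemma B_c2_4: "cost2 x y z0 (bB x y) ({0,2,3,4},{1,3,5,7}) = (x^4*y + 3*x^3*y^2 + 2*x^2*y^3)"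
  by (simp add: cost2_def load_def bB_def z0_def; algebra)

lemma B_cB1: "cost1 x y z0 (bB x y) ({1,3,4},{0,6,7}) = (2*x^5 + x^4*y)"
  by (simp add: cost1_def load_def bB_def z0_def; algebra)

lemma B_cB2: "cost2 x y z0 (bB x y) ({1,3,4},{0,6,7}) = (2*x^3*y^2 + 3*x^2*y^3 + x*y^4)"
  by (simp add: cost2_def load_def bB_def z0_def; algebra)

lemma B_NE: assumes "2*y \<le> x" "0 \<le> y" shows "is_NE x y z0 (bB x y) Acts8 ({0,2,3,4},{1,3,5,7})"
proof -
  define d where "d = x - 2*y"
  have d: "0 \<le> d" "x = 2*y + d" using assms(1) by (auto simp: d_def)
  have n1_0: "(2*x^5 + 3*x^4*y + x^3*y^2) \<le> (2*x^5 + 3*x^4*y + x^3*y^2)" by (simp add: algebra_simps)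
  have n1_1: "(2*x^5 + 3*x^4*y + x^3*y^2) \<le> (2*x^5 + 3*x^4*y + x^3*y^2)" by (simp add: algebra_simps)
  have n1_2: "(2*x^5 + 3*x^4*y + x^3*y^2) \<le> (2*x^5 + 3*x^4*y + x^3*y^2)" by (simp add: algebra_simps)
  have n1_3: "(2*x^5 + 3*x^4*y + x^3*y^2) \<le> (2*x^5 + 3*x^4*y + x^3*y^2)" by (simp add: algebra_simps)
  have n1_4: "(2*x^5 + 3*x^4*y + x^3*y^2) \<le> (2*x^5 + 3*x^4*y + x^3*y^2)" by (simp add: algebra_simps)
  have "(2*x^4*y + 4*x^3*y^2 + 2*x^2*y^3 - x*y^4 - y^5) - (x^4*y + 3*x^3*y^2 + 2*x^2*y^3) = (d^4*y + 9*d^3*y^2 + 30*d^2*y^3 + 43*d*y^4 + 21*y^5)" unfolding d(2) by algebra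
  moreover have "0 \<le> (d^4*y + 9*d^3*y^2 + 30*d^2*y^3 + 43*d*y^4 + 21*y^5)" using d assms(2) by (intro add_nonneg_nonneg mult_nonneg_nonneg zero_le_power; simp)
  ultimately have n2_0: "(x^4*y + 3*x^3*y^2 + 2*x^2*y^3) \<le> (2*x^4*y + 4*x^3*y^2 + 2*x^2*y^3 - x*y^4 - y^5)" by linarith
  have "(2*x^4*y + 4*x^3*y^2 + 2*x^2*y^3 - x*y^4 - y^5) - (x^4*y + 3*x^3*y^2 + 2*x^2*y^3) = (d^4*y + 9*d^3*y^2 + 30*d^2*y^3 + 43*d*y^4 + 21*y^5)" unfolding d(2) by algebra
  moreover have "0 \<le> (d^4*y + 9*d^3*y^2 + 30*d^2*y^3 + 43*d*y^4 + 21*y^5)" using d assms(2) by (intro add_nonneg_nonneg mult_nonneg_nonneg zero_le_power; simp)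
  ultimately have n2_1: "(x^4*y + 3*x^3*y^2 + 2*x^2*y^3) \<le> (2*x^4*y + 4*x^3*y^2 + 2*x^2*y^3 - x*y^4 - y^5)" by linarith
  have n2_2: "(x^4*y + 3*x^3*y^2 + 2*x^2*y^3) \<le> (x^4*y + 3*x^3*y^2 + 2*x^2*y^3)" by (simp add: algebra_simps)
  have n2_3: "(x^4*y + 3*x^3*y^2 + 2*x^2*y^3) \<le> (x^4*y + 3*x^3*y^2 + 2*x^2*y^3)" by (simp add: algebra_simps)
  have n2_4: "(x^4*y + 3*x^3*y^2 + 2*x^2*y^3) \<le> (x^4*y + 3*x^3*y^2 + 2*x^2*y^3)" by (simp add: algebra_simps)
  have m: "({0,2,3,4},{1,3,5,7}) \<in> Acts8 \<times> Acts8" by (simp add: Acts8_def)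
  show ?thesis unfolding is_NE_def Acts8_def ball_simps fst_conv snd_conv
    unfolding B_c1_0 B_c2_0 B_c1_1 B_c2_1 B_c1_2 B_c2_2 B_c1_3 B_c2_3 B_c1_4 B_c2_4
    using m n1_0 n1_1 n1_2 n1_3 n1_4 n2_0 n2_1 n2_2 n2_3 n2_4 unfolding Acts8_def by blast
qed

lemma B_ratio: "DB x y * social_cost x y z0 (bB x y) ({0,2,3,4},{1,3,5,7}) = NB x y * social_cost x y z0 (bB x y) ({1,3,4},{0,6,7})"
  unfolding social_cost_def B_c1_0 B_c2_4 B_cB1 B_cB2 DB_def NB_def by algebra

lemma acts8_fin: "finite Acts8" "\<forall>X\<in>Acts8. finite X" "\<forall>X\<in>Acts8. 0 \<in> X \<or> 1 \<in> X"
  by (auto simp: Acts8_def)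

lemma cost1_lb:
  assumes "finite X" "r0 \<in> X" "\<forall>r. 0 \<le> \<beta> r" "0 < x" "0 \<le> y"
  shows "x * (\<beta> r0 * x) \<le> cost1 x y z0 \<beta> (X,Y)"
proof -
  have ld: "\<And>r. r \<in> X \<Longrightarrow> x \<le> load x y (X,Y) r" using assms by (auto simp: load_def)
  have "\<beta> r0 * x \<le> z0 r0 + \<beta> r0 * load x y (X,Y) r0"
    using ld[OF assms(2)] assms(3) by (simp add: z0_def mult_left_mono)
  also have "\<dots> \<le> (\<Sum>r\<in>X. z0 r + \<beta> r * load x y (X,Y) r)"
  proof (rule member_le_sum[OF assms(2) _ assms(1)])
    fix r assume "r \<in> X - {r0}"
    then have "0 \<le> load x y (X,Y) r" using ld[of r] assms(4) by auto
    then show "0 \<le> z0 r + \<beta> r * load x y (X,Y) r" using assms(3) by (simp add: z0_def)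
  qed
  finally show ?thesis unfolding cost1_def using assms(4) by (simp add: mult_left_mono)
qed

lemma cost2_nonneg:
  assumes "\<forall>r. 0 \<le> \<beta> r" "0 \<le> x" "0 \<le> y"
  shows "0 \<le> cost2 x y z0 \<beta> (X,Y)"
  unfolding cost2_def using assms
  by (intro mult_nonneg_nonneg sum_nonneg) (auto simp: z0_def load_def)

lemma social_pos8:
  assumes "X \<in> Acts8" "\<forall>r. 0 \<le> \<beta> r" "0 < \<beta> 0" "0 < \<beta> 1" "0 < x" "0 \<le> y"
  shows "0 < social_cost x y z0 \<beta> (X,Y)"
proof -
  obtain r0 where r0: "r0 \<in> X" "0 < \<beta> r0" using assms(1,3,4) acts8_fin(3) by blast
  have "x * (\<beta> r0 * x) \<le> cost1 x y z0 \<beta> (X,Y)"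
    using cost1_lb[OF _ r0(1) assms(2,5,6)] acts8_fin(2) assms(1) by blast
  moreover have "0 < x * (\<beta> r0 * x)" using r0 assms(5) by simp
  moreover have "0 \<le> cost2 x y z0 \<beta> (X,Y)" using cost2_nonneg assms by auto
  ultimately show ?thesis unfolding social_cost_def by linarith
qed

lemma lower_gen:
  assumes xy: "0 < x" "0 \<le> y" and bn: "\<forall>r. 0 \<le> \<beta> r" "0 < \<beta> 0" "0 < \<beta> 1"
    and NE: "is_NE x y z0 \<beta> Acts8 A" and B: "B \<in> Acts8 \<times> Acts8"
    and ratio: "D * social_cost x y z0 \<beta> A = N * social_cost x y z0 \<beta> B" and Dpos: "0 < D"
    and G: "G \<in> {sym_congestion_games, sym_network_games}"
  shows "ereal (N / D) \<le> poa_class x y G"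
proof -
  let ?S = "social_cost x y z0 \<beta> ` (Acts8 \<times> Acts8)"
  have fin: "finite ?S" "?S \<noteq> {}" using acts8_fin(1) by (auto simp: Acts8_def)
  have allpos: "\<forall>v\<in>?S. 0 < v" using social_pos8[OF _ bn xy] by auto
  have opt: "0 < opt_cost x y z0 \<beta> Acts8" unfolding opt_cost_def using fin allpos by simp
  have optB: "opt_cost x y z0 \<beta> Acts8 \<le> social_cost x y z0 \<beta> B" unfolding opt_cost_def
    using fin B by (intro Min_le) auto
  have Ain: "A \<in> Acts8 \<times> Acts8" using NE by (simp add: is_NE_def)
  have sA: "0 < social_cost x y z0 \<beta> A" using allpos Ain by auto
  have sB: "0 < social_cost x y z0 \<beta> B" using allpos B by auto
  have "N / D = social_cost x y z0 \<beta> A / social_cost x y z0 \<beta> B"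
    using ratio Dpos sB by (simp add: field_simps)
  also have "\<dots> \<le> social_cost x y z0 \<beta> A / opt_cost x y z0 \<beta> Acts8"
    using sA opt optB by (intro divide_left_mono) auto
  finally have r1: "ereal (N / D) \<le> ereal (social_cost x y z0 \<beta> A / opt_cost x y z0 \<beta> Acts8)" by simp
  also have "\<dots> \<le> poa_instance x y z0 \<beta> Acts8"
    unfolding poa_instance_def using NE by (intro Sup_upper) blast
  also have "\<dots> \<le> poa_class x y G"
  proof -
    have "\<forall>r\<in>E8. z0 r \<ge> 0 \<and> \<beta> r \<ge> 0" using bn by (simp add: z0_def)
    then have "(z0, \<beta>, Acts8) \<in> G" using in_net G by auto
    then show ?thesis unfolding poa_class_def using opt by (intro Sup_upper) blast
  qed
  finally show ?thesis .
qed

lemma regimeA: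
  assumes x: "0 < x" "y \<le> x" "0 \<le> y" and q: "x^3 - x^2*y - 2*x*y^2 - y^3 \<le> 0"
    and G: "G \<in> {sym_congestion_games, sym_network_games}"
  shows "poa_class x y G = ereal (NA x y / DA x y)"
proof (rule antisym)
  show "poa_class x y G \<le> ereal (NA x y / DA x y)"
    by (rule upper_class[OF G ptA[OF x(2,3) q]])
       (use x in \<open>auto intro: mA1_nonneg mA2_nonneg mA3_nonneg mA4_nonneg DA_pos\<close>)
next
  have bn: "\<forall>r. 0 \<le> bA x y r" using x by (simp add: bA_def)
  have b01: "0 < bA x y 0" "0 < bA x y 1" using x by (simp_all add: bA_def)
  show "ereal (NA x y / DA x y) \<le> poa_class x y G"
    by (rule lower_gen[OF x(1,3) bn b01 A_NE[OF x(2,3)] _ A_ratio DA_pos[OF x(1,3)] G])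
       (simp add: Acts8_def)
qed

lemma regimeB:
  assumes x: "0 < x" "2*y \<le> x" "0 \<le> y" and q: "0 \<le> x^3 - x^2*y - 2*x*y^2 - y^3"
    and G: "G \<in> {sym_congestion_games, sym_network_games}"
  shows "poa_class x y G = ereal (NB x y / DB x y)"
proof (rule antisym)
  show "poa_class x y G \<le> ereal (NB x y / DB x y)"
    by (rule upper_class[OF G ptB[OF x(2,3) q]])
       (use x in \<open>auto intro: mB1_nonneg mB2_nonneg mB3_nonneg mB4_nonneg DB_pos\<close>)
next
  have xy: "y < x" using x by linarith
  have bn: "\<forall>r. 0 \<le> bB x y r" using x xy by (simp add: bB_def)
  have b01: "0 < bB x y 0" "0 < bB x y 1" using x xy by (simp_all add: bB_def power2_eq_square mult_strict_mono)
  show "ereal (NB x y / DB x y) \<le> poa_class x y G"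
    by (rule lower_gen[OF x(1,3) bn b01 B_NE[OF x(2,3)] _ B_ratio DB_pos[OF x(1,3)] G])
       (simp add: Acts8_def)
qed

definition FA :: "real \<Rightarrow> real \<Rightarrow> real" where
  "FA w1 w2 = (2*w1^4 + 6*w1^3*w2 + 8*w1^2*w2^2 + 6*w1*w2^3 + 2*w2^4) /
          (2*w1^4 + 3*w1^3*w2 + 4*w1^2*w2^2 + 3*w1*w2^3 + 2*w2^4 + w1*w2*min (w1^2) (w2^2))"
definition FB :: "real \<Rightarrow> real \<Rightarrow> real" where
  "FB w1 w2 = (2*w1^3*w2 + 4*w1^2*w2^2 + 2*w1*w2^3 + 2 * max (w1^4 + w1^3*w2) (w1*w2^3 + w2^4)) /
          (w1^3*w2 + 2*w1^2*w2^2 + w1*w2^3 + 2*w1*w2*min (w1^2) (w2^2)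
           + 2 * max (w1^4) (w2^4) + min (w1^4) (w2^4))"

lemma FA_sym: "FA w1 w2 = FA w2 w1"
  unfolding FA_def by (simp add: min.commute algebra_simps)
lemma FB_sym: "FB w1 w2 = FB w2 w1"
  unfolding FB_def by (simp add: min.commute max.commute algebra_simps)

lemma Q3_hom: "0 < y \<Longrightarrow> x^3 - x^2*y - 2*x*y^2 - y^3 = y^3 * q3 (x / y)"
  unfolding q3_def by (simp add: field_simps power3_eq_cube power2_eq_square)

lemma main_ge:
  fixes w1 w2 :: real
  assumes "0 \<le> w2" "w2 \<le> w1" "0 < w1" "G \<in> {sym_congestion_games, sym_network_games}"
  shows "(w2 / sigma \<le> w1 \<and> w1 \<le> sigma * w2 \<longrightarrow> poa_class w1 w2 G = ereal (FA w1 w2)) \<and>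
         (w1 \<ge> sigma * w2 \<or> w1 \<le> w2 / sigma \<longrightarrow> poa_class w1 w2 G = ereal (FB w1 w2))"
proof (intro conjI impI)
  have sg: "2 < sigma" using sigma_props by simp
  have sq: "w2^2 \<le> w1^2" "w2^4 \<le> w1^4" using assms by (auto intro: power_mono)
  {
    assume c: "w2 / sigma \<le> w1 \<and> w1 \<le> sigma * w2"
    have w2p: "0 < w2" using c assms sg by (smt (verit) mult_nonneg_nonpos)
    have "w1 / w2 \<le> sigma" using c w2p by (simp add: divide_le_eq mult.commute)
    then have "q3 (w1 / w2) \<le> 0" using assms w2p by (intro q3_le) auto
    then have q: "w1^3 - w1^2*w2 - 2*w1*w2^2 - w2^3 \<le> 0" using Q3_hom[OF w2p, of w1] w2p
      by (simp add: mult_nonneg_nonpos)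
    have mn: "min (w1^2) (w2^2) = w2^2" using sq by simp
    have "FA w1 w2 = NA w1 w2 / DA w1 w2"
    proof -
      have "2*w1^4 + 3*w1^3*w2 + 4*w1^2*w2^2 + 3*w1*w2^3 + 2*w2^4 + w1*w2*min (w1^2) (w2^2) = DA w1 w2"
        unfolding mn DA_def by algebra
      moreover have "2*w1^4 + 6*w1^3*w2 + 8*w1^2*w2^2 + 6*w1*w2^3 + 2*w2^4 = NA w1 w2"
        unfolding NA_def by simp
      ultimately show ?thesis unfolding FA_def by simp
    qed
    then show "poa_class w1 w2 G = ereal (FA w1 w2)" using regimeA[OF assms(3,2,1) q assms(4)] by simp
  }
  {
    assume c: "w1 \<ge> sigma * w2 \<or> w1 \<le> w2 / sigma"
    have c1: "w1 \<ge> sigma * w2"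
    proof (rule ccontr)
      assume "\<not> sigma * w2 \<le> w1"
      then have "w1 \<le> w2 / sigma" using c by auto
      then have "w1 * sigma \<le> w2" using sg by (simp add: le_divide_eq)
      moreover have "w1 * 2 < w1 * sigma" using sg assms by simp
      ultimately show False using assms by linarith
    qed
    have "2 * w2 \<le> sigma * w2" using sg assms(1) by (intro mult_right_mono) auto
    then have two: "2 * w2 \<le> w1" using c1 by linarith
    have q: "0 \<le> w1^3 - w1^2*w2 - 2*w1*w2^2 - w2^3"
    proof (cases "w2 = 0")
      case True then show ?thesis using assms by simp
    next
      case False
      then have w2p: "0 < w2" using assms by simp
      have "sigma \<le> w1 / w2" using c1 w2p by (simp add: le_divide_eq)
      then have "0 \<le> q3 (w1 / w2)" by (rule q3_ge)
      then show ?thesis using Q3_hom[OF w2p, of w1] w2p by simp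
    qed
    have "NB w1 w2 = (w1*(w2+2*w1)) * (2*w1^4 + 4*w1^3*w2 + 4*w1^2*w2^2 + 2*w1*w2^3)"
      unfolding NB_def by algebra
    moreover have "DB w1 w2 = (w1*(w2+2*w1)) * (2*w1^4 + w1^3*w2 + 2*w1^2*w2^2 + 3*w1*w2^3 + w2^4)"
      unfolding DB_def by algebra
    moreover have "w1*(w2+2*w1) \<noteq> 0" using assms by simp
    ultimately have e1: "NB w1 w2 / DB w1 w2 = (2*w1^4 + 4*w1^3*w2 + 4*w1^2*w2^2 + 2*w1*w2^3) / (2*w1^4 + w1^3*w2 + 2*w1^2*w2^2 + 3*w1*w2^3 + w2^4)"
      by simp
    have m: "max (w1^4 + w1^3*w2) (w1*w2^3 + w2^4) = w1^4 + w1^3*w2"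
    proof -
      have "w1*w2^3 \<le> w1^3*w2"
      proof -
        have "w1*w2*w2^2 \<le> w1*w2*w1^2" using sq assms by (intro mult_left_mono) auto
        then show ?thesis by (simp add: power2_eq_square power3_eq_cube algebra_simps)
      qed
      then show ?thesis using sq by simp
    qed
    have mn: "min (w1^2) (w2^2) = w2^2" "max (w1^4) (w2^4) = w1^4" "min (w1^4) (w2^4) = w2^4" using sq by simp_all
    have "FB w1 w2 = NB w1 w2 / DB w1 w2"
    proof -
      have dd: "w1^3*w2 + 2*w1^2*w2^2 + w1*w2^3 + 2*w1*w2*min (w1^2) (w2^2) + 2 * max (w1^4) (w2^4) + min (w1^4) (w2^4)
         = 2*w1^4 + w1^3*w2 + 2*w1^2*w2^2 + 3*w1*w2^3 + w2^4"
        unfolding mn by algebra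
      have nn: "2*w1^3*w2 + 4*w1^2*w2^2 + 2*w1*w2^3 + 2 * max (w1^4 + w1^3*w2) (w1*w2^3 + w2^4)
         = 2*w1^4 + 4*w1^3*w2 + 4*w1^2*w2^2 + 2*w1*w2^3"
        unfolding m by algebra
      show ?thesis unfolding FB_def e1 nn dd by (rule refl)
    qed
    then show "poa_class w1 w2 G = ereal (FB w1 w2)" using regimeB[OF assms(3) two assms(1) q assms(4)] by simp
  }
qed

theorem theorem5:
  fixes w1 w2 :: real
  assumes "w1 \<ge> 0" "w2 \<ge> 0" "w1 + w2 > 0"
  shows "\<forall>G \<in> {sym_congestion_games, sym_network_games}.
    (w2 / sigma \<le> w1 \<and> w1 \<le> sigma * w2 \<longrightarrow>
       poa_class w1 w2 G = ereal
         ((2*w1^4 + 6*w1^3*w2 + 8*w1^2*w2^2 + 6*w1*w2^3 + 2*w2^4) /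
          (2*w1^4 + 3*w1^3*w2 + 4*w1^2*w2^2 + 3*w1*w2^3 + 2*w2^4 + w1*w2*min (w1^2) (w2^2)))) \<and>
    (w1 \<ge> sigma * w2 \<or> w1 \<le> w2 / sigma \<longrightarrow>
       poa_class w1 w2 G = ereal
         ((2*w1^3*w2 + 4*w1^2*w2^2 + 2*w1*w2^3 + 2 * max (w1^4 + w1^3*w2) (w1*w2^3 + w2^4)) /
          (w1^3*w2 + 2*w1^2*w2^2 + w1*w2^3 + 2*w1*w2*min (w1^2) (w2^2)
           + 2 * max (w1^4) (w2^4) + min (w1^4) (w2^4))))"
proof -
  have sg: "0 < sigma" using sigma_props by simp
  have key: "(w2 / sigma \<le> w1 \<and> w1 \<le> sigma * w2 \<longrightarrow> poa_class w1 w2 G = ereal (FA w1 w2)) \<and>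
         (w1 \<ge> sigma * w2 \<or> w1 \<le> w2 / sigma \<longrightarrow> poa_class w1 w2 G = ereal (FB w1 w2))"
    if G: "G \<in> {sym_congestion_games, sym_network_games}" for G
  proof (cases "w2 \<le> w1")
    case True
    then show ?thesis using main_ge[OF assms(2) True _ G] assms by linarith
  next
    case False
    have m: "(w1 / sigma \<le> w2 \<and> w2 \<le> sigma * w1 \<longrightarrow> poa_class w2 w1 G = ereal (FA w2 w1)) \<and>
         (w2 \<ge> sigma * w1 \<or> w2 \<le> w1 / sigma \<longrightarrow> poa_class w2 w1 G = ereal (FB w2 w1))"
    proof -
      have "w1 \<le> w2" "0 < w2" using False assms by linarith+
      then show ?thesis using main_ge[of w1 w2 G] assms(1) G by blast
    qed
    have e1: "w2 / sigma \<le> w1 \<longleftrightarrow> w2 \<le> sigma * w1" using sg by (simp add: divide_le_eq mult.commute)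
    have e2: "w1 / sigma \<le> w2 \<longleftrightarrow> w1 \<le> sigma * w2" using sg by (simp add: divide_le_eq mult.commute)
    have e3: "w1 \<le> w2 / sigma \<longleftrightarrow> sigma * w1 \<le> w2" using sg by (simp add: le_divide_eq mult.commute)
    have e4: "w2 \<le> w1 / sigma \<longleftrightarrow> sigma * w2 \<le> w1" using sg by (simp add: le_divide_eq mult.commute)
    show ?thesis using m e1 e2 e3 e4 FA_sym[of w1 w2] FB_sym[of w1 w2] poa_class_swap[of w1 w2 G] by auto
  qed
  show ?thesis using key unfolding FA_def FB_def by blast
qed

end
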